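(* Let $\mathcal{A}$ be a complex Banach algebra with unity, $a,b\in\mathcal{A}$ and $k$ a positive integer, and suppose $\alpha_{1}\cdots\alpha_{k}ab=\alpha_{1}\cdots\alpha_{k}ba$ for all $\alpha_{1},\dots,\alpha_{k}\in\{a,b\}$. Then: (1) if $a\in\mathcal{A}^{qnil}$ (or $b\in\mathcal{A}^{qnil}$), then $ab\in\mathcal{A}^{qnil}$; (2) if $a\in\mathcal{A}^{qnil}$, then $b\in\mathcal{A}^{qnil}$ if and only if $a+b\in\mathcal{A}^{qnil}$; (3) if $a$ and $b$ are g$\pi$-Hirano invertible, then $ab$ is g$\pi$-Hirano invertible; (4) if $a\in\mathcal{A}^{qnil}$ and $b$ is g$\pi$-Hirano invertible, then $a+b$ is g$\pi$-Hirano invertible.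
   Context: $\mathcal{A}^{qnil}$ denotes the set of quasinilpotent elements of $\mathcal{A}$ (spectrum equal to $\{0\}$). An element $a\in\mathcal{A}$ is g$\pi$-Hirano invertible if there exists $x\in\mathcal{A}$ with $xax=x$, $ax=xa$ and $a-a^{n+2}x\in\mathcal{A}^{qnil}$ for some positive integer $n$. *)

theory Defs
  imports "HOL-Analysis.Analysis"
begin

class complex_banach_algebra_1 = banach + real_normed_algebra_1 +
  fixes cscale :: "complex \<Rightarrow> 'a \<Rightarrow> 'a"
  assumes cscale_of_real: "cscale (complex_of_real r) x = scaleR r x"
    and cscale_add_right: "cscale c (x + y) = cscale c x + cscale c y"
    and cscale_add_left: "cscale (c + d) x = cscale c x + cscale d x"
    and cscale_cscale: "cscale c (cscale d x) = cscale (c * d) x"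
    and norm_cscale: "norm (cscale c x) = cmod c * norm x"
    and cscale_mult_left: "cscale c (x * y) = cscale c x * y"
    and cscale_mult_right: "cscale c (x * y) = x * cscale c y"

instantiation complex :: complex_banach_algebra_1
begin
definition cscale_complex :: "complex \<Rightarrow> complex \<Rightarrow> complex" where
  "cscale_complex c x = c * x"
instance
  by standard (auto simp: cscale_complex_def algebra_simps norm_mult scaleR_conv_of_real)
end

definition invertible_el :: "'a::ring_1 \<Rightarrow> bool" where
  "invertible_el x \<longleftrightarrow> (\<exists>y. x * y = 1 \<and> y * x = 1)"

definition cspectrum :: "'a::complex_banach_algebra_1 \<Rightarrow> complex set" where
  "cspectrum a = {z. \<not> invertible_el (cscale z 1 - a)}"

definition quasinilpotent :: "'a::complex_banach_algebra_1 \<Rightarrow> bool" where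
  "quasinilpotent a \<longleftrightarrow> cspectrum a = {0}"

definition gpi_Hirano_invertible :: "'a::complex_banach_algebra_1 \<Rightarrow> bool" where
  "gpi_Hirano_invertible a \<longleftrightarrow>
     (\<exists>x. x * a * x = x \<and> a * x = x * a \<and>
          (\<exists>n::nat. n > 0 \<and> quasinilpotent (a - a ^ (n + 2) * x)))"

end

theory Submission
  imports Defs "HOL-Computational_Algebra.Formal_Power_Series"
begin


definition iota :: "complex \<Rightarrow> 'a::complex_banach_algebra_1" where
  "iota c = cscale c 1"

lemma cscale_eq_iota: "cscale c (x::'a::complex_banach_algebra_1) = iota c * x"
  unfolding iota_def using cscale_mult_left[of c 1 x] by simp

lemma iota_commute: "iota c * (x::'a::complex_banach_algebra_1) = x * iota c"
  unfolding iota_def using cscale_mult_left[of c 1 x] cscale_mult_right[of c x 1] by simp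

lemma iota_add: "(iota (c + d) :: 'a::complex_banach_algebra_1) = iota c + iota d"
  unfolding iota_def by (simp add: cscale_add_left)

lemma iota_mult: "(iota (c * d) :: 'a::complex_banach_algebra_1) = iota c * iota d"
  unfolding iota_def using cscale_cscale[of c d 1] cscale_mult_left[of c 1 "cscale d 1"] by (metis mult_1_left)

lemma iota_of_real: "(iota (complex_of_real r) :: 'a::complex_banach_algebra_1) = of_real r"
  unfolding iota_def using cscale_of_real[of r "1::'a"] by (simp only: of_real_def[where 'a='a])

lemma iota_0 [simp]: "(iota 0 :: 'a::complex_banach_algebra_1) = 0"
  using iota_of_real[of 0] by simp

lemma iota_1 [simp]: "(iota 1 :: 'a::complex_banach_algebra_1) = 1"
  using iota_of_real[of 1] by simp

lemma norm_iota [simp]: "norm (iota c :: 'a::complex_banach_algebra_1) = cmod c"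
  unfolding iota_def by (simp add: norm_cscale)

lemma iota_minus: "(iota (- c) :: 'a::complex_banach_algebra_1) = - iota c"
  proof -
  have "iota (-c) + iota c = (0::'a)" by (simp flip: iota_add)
  then show ?thesis by (simp add: eq_neg_iff_add_eq_0)
qed

lemma iota_diff: "(iota (c - d) :: 'a::complex_banach_algebra_1) = iota c - iota d"
  by (simp only: diff_conv_add_uminus iota_add iota_minus)

lemma iota_power: "(iota (c ^ n) :: 'a::complex_banach_algebra_1) = iota c ^ n"
  by (induction n) (simp_all add: iota_mult)

lemma iota_sum: "(iota (sum f A) :: 'a::complex_banach_algebra_1) = (\<Sum>i\<in>A. iota (f i))"
  by (induction A rule: infinite_finite_induct) (simp_all add: iota_add)

lemma iota_of_nat: "(iota (of_nat n) :: 'a::complex_banach_algebra_1) = of_nat n"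
  using iota_of_real[of "real n"] by simp

lemma iota_mult_power: "(iota c * x) ^ n = iota (c ^ n) * (x::'a::complex_banach_algebra_1) ^ n"
proof (induction n)
  case (Suc n)
  have "(iota c * x) ^ Suc n = iota c * x * (iota (c ^ n) * x ^ n)" by (simp add: Suc mult.assoc)
  also have "\<dots> = iota c * (x * iota (c ^ n)) * x ^ n" by (simp only: mult.assoc)
  also have "\<dots> = iota c * iota (c ^ n) * (x * x ^ n)" by (simp only: iota_commute[of "c ^ n" x, symmetric] mult.assoc)
  finally show ?case by (simp add: iota_mult)
qed simp

lemma invertible_mult:
  assumes "invertible_el (x::'a::ring_1)" "invertible_el y"
  shows "invertible_el (x * y)"
proof -
  obtain x' where x: "x * x' = 1" "x' * x = 1" using assms(1) unfolding invertible_el_def by blast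
  obtain y' where y: "y * y' = 1" "y' * y = 1" using assms(2) unfolding invertible_el_def by blast
  have "x * y * (y' * x') = 1" by (metis x(1) y(1) mult.assoc mult_1_left)
  moreover have "y' * x' * (x * y) = 1" by (metis x(2) y(2) mult.assoc mult_1_left)
  ultimately show ?thesis unfolding invertible_el_def by blast
qed

lemma invertible_neg: "invertible_el (- (x::'a::ring_1)) \<longleftrightarrow> invertible_el x"
  unfolding invertible_el_def by (metis minus_mult_minus minus_mult_left minus_mult_right)

lemma not_invertible_0: "\<not> invertible_el (0::'a::complex_banach_algebra_1)"
  unfolding invertible_el_def by simp

lemma invertible_iota: "c \<noteq> 0 \<Longrightarrow> invertible_el (iota c :: 'a::complex_banach_algebra_1)"
  unfolding invertible_el_def
  by (rule exI[of _ "iota (inverse c)"]) (simp add: iota_mult[symmetric])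

section \<open>Neumann series\<close>

lemma neumann:
  fixes z :: "'a::complex_banach_algebra_1"
  assumes "summable (\<lambda>j. norm (z ^ j))"
  shows "(1 - z) * (\<Sum>j. z ^ j) = 1" "(\<Sum>j. z ^ j) * (1 - z) = 1"
proof -
  have s: "summable (\<lambda>j. z ^ j)" using assms summable_norm_cancel by blast
  have h: "(\<Sum>j. z ^ Suc j) = (\<Sum>j. z ^ j) - 1"
    using suminf_split_head[OF s] by simp
  have "z * (\<Sum>j. z ^ j) = (\<Sum>j. z * z ^ j)" using suminf_mult[OF s] by simp
  also have "\<dots> = (\<Sum>j. z ^ j) - 1" using h by simp
  finally have 1: "z * (\<Sum>j. z ^ j) = (\<Sum>j. z ^ j) - 1" .
  have "(\<Sum>j. z ^ j) * z = (\<Sum>j. z ^ j * z)" using suminf_mult2[OF s] by simp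
  also have "\<dots> = (\<Sum>j. z ^ j) - 1" using h by (simp add: power_commutes)
  finally have 2: "(\<Sum>j. z ^ j) * z = (\<Sum>j. z ^ j) - 1" .
  show "(1 - z) * (\<Sum>j. z ^ j) = 1" using 1 by (simp add: algebra_simps)
  show "(\<Sum>j. z ^ j) * (1 - z) = 1" using 2 by (simp add: algebra_simps)
qed

lemma neumann_invertible:
  fixes z :: "'a::complex_banach_algebra_1"
  assumes "summable (\<lambda>j. norm (z ^ j))"
  shows "invertible_el (1 - z)"
  using neumann[OF assms] unfolding invertible_el_def by blast

section \<open>Power-norm quasinilpotence\<close>

definition qn :: "'a::complex_banach_algebra_1 \<Rightarrow> bool" where
  "qn z \<longleftrightarrow> (\<forall>t>0. \<exists>C. \<forall>j. t ^ j * norm (z ^ j) \<le> C)"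

lemma qn_summable:
  assumes "qn z" "t > 0"
  shows "summable (\<lambda>j. t ^ j * norm (z ^ j))"
proof -
  obtain C where C: "\<And>j. (2*t) ^ j * norm (z ^ j) \<le> C" using assms unfolding qn_def
    by (metis mult_pos_pos zero_less_numeral)
  show ?thesis
  proof (rule summable_comparison_test[where g = "\<lambda>j. C * (1/2) ^ j"])
    show "\<exists>N. \<forall>n\<ge>N. norm (t ^ n * norm (z ^ n)) \<le> C * (1 / 2) ^ n"
    proof (intro exI allI impI)
      fix n :: nat
      have "t ^ n * norm (z ^ n) = ((2*t) ^ n * norm (z ^ n)) * (1/2) ^ n"
        by (simp add: power_mult_distrib field_simps)
      also have "\<dots> \<le> C * (1/2) ^ n" using C[of n] by (intro mult_right_mono) auto
      finally show "norm (t ^ n * norm (z ^ n)) \<le> C * (1 / 2) ^ n" using assms(2) by simp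
    qed
    show "summable (\<lambda>j. C * (1 / 2) ^ j)" by (intro summable_mult summable_geometric) simp
  qed
qed

lemma qn_imp_quasinilpotent:
  fixes a :: "'a::complex_banach_algebra_1"
  assumes "qn a"
  shows "quasinilpotent a"
proof -
  have "lam \<notin> cspectrum a" if "lam \<noteq> 0" for lam
  proof -
    let ?z = "iota (inverse lam) * a"
    have "summable (\<lambda>j. norm (?z ^ j))"
    proof -
      have "summable (\<lambda>j. (inverse (cmod lam)) ^ j * norm (a ^ j))"
        using qn_summable[OF assms] that by simp
      moreover have "norm (norm (?z ^ j)) \<le> (inverse (cmod lam)) ^ j * norm (a ^ j)" for j
      proof -
        have "norm (?z ^ j) = norm (iota (inverse lam ^ j) * a ^ j)" by (simp only: iota_mult_power)
        also have "\<dots> \<le> norm (iota (inverse lam ^ j) :: 'a) * norm (a ^ j)" by (rule norm_mult_ineq)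
        also have "norm (iota (inverse lam ^ j) :: 'a) = (inverse (cmod lam)) ^ j"
          by (simp add: norm_power norm_inverse)
        finally show ?thesis by simp
      qed
      ultimately show ?thesis
        using summable_comparison_test[where f="\<lambda>j. norm (?z ^ j)" and g = "\<lambda>j. (inverse (cmod lam)) ^ j * norm (a ^ j)"]
        by blast
    qed
    then have "invertible_el (1 - ?z)" by (rule neumann_invertible)
    then have "invertible_el (iota lam * (1 - ?z))" using invertible_iota[OF that] invertible_mult by blast
    moreover have "iota lam * (1 - ?z) = iota lam - a"
      using that by (simp add: algebra_simps mult.assoc[symmetric] iota_mult[symmetric])
    ultimately show ?thesis unfolding cspectrum_def by (simp add: cscale_eq_iota)
  qed
  moreover have "0 \<in> cspectrum a"
  proof (rule ccontr)
    assume "0 \<notin> cspectrum a"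
    then have "invertible_el (- a)" unfolding cspectrum_def by (simp add: cscale_eq_iota)
    then have "invertible_el a" by (simp add: invertible_neg)
    then obtain y where y: "a * y = 1" "y * a = 1" unfolding invertible_el_def by blast
    have ay: "a ^ j * y ^ j = 1" for j
    proof (induction j)
      case (Suc j)
      have "a ^ Suc j * y ^ Suc j = a * (a ^ j * y ^ j) * y"
        by (simp add: mult.assoc power_commutes)
      then show ?case using Suc y by simp
    qed simp
    have tpos: "(2 * (norm y + 1) :: real) > 0" by (smt (verit) norm_ge_zero)
    obtain C where C: "\<And>j. (2 * (norm y + 1)) ^ j * norm (a ^ j) \<le> C"
      using assms tpos unfolding qn_def by blast
    have "1 \<le> C * (1/2) ^ j" for j
    proof -
      have "1 = norm (a ^ j * y ^ j)" using ay by simp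
      also have "\<dots> \<le> norm (a ^ j) * (norm y + 1) ^ j"
        by (rule order_trans[OF norm_mult_ineq]) (auto intro!: mult_left_mono order_trans[OF norm_power_ineq] power_mono)
      also have "\<dots> = ((2 * (norm y + 1)) ^ j * norm (a ^ j)) * (1/2) ^ j"
        by (simp only: power_mult_distrib) (simp add: field_simps)
      also have "\<dots> \<le> C * (1/2) ^ j" using C[of j] by (intro mult_right_mono) auto
      finally show ?thesis .
    qed
    moreover have "(\<lambda>j. C * (1/2::real) ^ j) \<longlonglongrightarrow> 0"
      by (intro tendsto_mult_right_zero LIMSEQ_power_zero) auto
    ultimately have "1 \<le> (0::real)"
      by (intro LIMSEQ_le_const[where X="\<lambda>j. C * (1/2::real) ^ j"]) auto
    then show False by simp
  qed
  ultimately have "cspectrum a = {0}" by auto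
  then show ?thesis unfolding quasinilpotent_def .
qed


lemma norm_iota_mult: "norm (iota c * (y::'a::complex_banach_algebra_1)) = cmod c * norm y"
  by (metis cscale_eq_iota norm_cscale)

lemma geo_ring: "(1 - z) * (\<Sum>j<n. z ^ j) = 1 - (z::'a::ring_1) ^ n"
proof (induction n)
  case (Suc n)
  have "(1 - z) * (\<Sum>j<Suc n. z ^ j) = (1 - z) * (\<Sum>j<n. z ^ j) + (1 - z) * z ^ n"
    by (simp add: distrib_left)
  also have "\<dots> = 1 - z ^ n + (z ^ n - z ^ Suc n)" using Suc by (simp add: algebra_simps)
  finally show ?case by simp
qed simp

definition omega :: "nat \<Rightarrow> complex" where
  "omega n = cis (2 * pi / real n)"

lemma omega_pow_n:
  assumes "n > 0" shows "omega n ^ n = 1"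
proof -
  have "omega n ^ n = cis (real n * (2 * pi / real n))" unfolding omega_def by (rule Complex.DeMoivre)
  also have "real n * (2 * pi / real n) = 2 * pi" using assms by simp
  finally show ?thesis by simp
qed

lemma norm_omega [simp]: "cmod (omega n) = 1"
  unfolding omega_def by simp

lemma omega_pow_ne1:
  assumes "0 < j" "j < n"
  shows "omega n ^ j \<noteq> 1"
proof
  assume "omega n ^ j = 1"
  moreover have "omega n ^ j = cis (real j * (2 * pi / real n))" unfolding omega_def by (rule Complex.DeMoivre)
  ultimately have "cis (real j * (2 * pi / real n)) = 1" by simp
  then have "cos (real j * (2 * pi / real n)) = 1" by (simp add: complex_eq_iff)
  then obtain m :: int where m: "real j * (2 * pi / real n) = m * 2 * pi"
    by (auto simp: cos_one_2pi_int)
  then have "real j = m * real n" using assms by (simp add: field_simps)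
  then have "int j = m * int n" by (metis of_int_eq_iff of_int_mult of_int_of_nat_eq)
  moreover have "0 < int j" "int j < int n" using assms by auto
  ultimately show False
    by (metis mult_less_cancel_right2 not_less of_nat_0_le_iff mult_pos_pos zero_less_mult_pos2
        int_one_le_iff_zero_less mult_le_cancel_right1 order_le_less_trans less_imp_le)
qed

lemma sum_omega:
  assumes "j < n"
  shows "(\<Sum>k<n. (omega n ^ j) ^ k) = (if j = 0 then of_nat n else 0)"
proof (cases "j = 0")
  case False
  then have ne: "omega n ^ j \<noteq> 1" using omega_pow_ne1 assms by simp
  have "(omega n ^ j) ^ n = (omega n ^ n) ^ j" by (simp only: power_mult[symmetric] mult.commute)
  then have "(omega n ^ j) ^ n = 1" using omega_pow_n[of n] assms by simp
  then show ?thesis using geometric_sum[OF ne, of n] False by simp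
qed simp

locale rickart =
  fixes a :: "'a::complex_banach_algebra_1"
  assumes inv: "\<And>lam. lam \<noteq> 0 \<Longrightarrow> invertible_el (iota lam - a)"
begin

lemma inv1: "invertible_el (1 - iota lam * a)"
proof (cases "lam = 0")
  case True
  then show ?thesis unfolding invertible_el_def by (intro exI[of _ 1]) simp
next
  case False
  have "1 - iota lam * a = iota lam * (iota (inverse lam) - a)"
    using False by (simp add: algebra_simps mult.assoc[symmetric] iota_mult[symmetric])
  then show ?thesis using invertible_mult[OF invertible_iota[OF False] inv[of "inverse lam"]] False
    by simp
qed

definition f :: "complex \<Rightarrow> 'a" where
  "f lam = (SOME y. (1 - iota lam * a) * y = 1 \<and> y * (1 - iota lam * a) = 1)"

lemma f_inv: "(1 - iota lam * a) * f lam = 1 \<and> f lam * (1 - iota lam * a) = 1"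
  unfolding f_def using inv1[of lam] unfolding invertible_el_def by (rule someI_ex)

lemma f_left: "f lam * (1 - iota lam * a) = 1" and f_right: "(1 - iota lam * a) * f lam = 1"
  using f_inv by auto

lemma resolvent: "f l - f m = iota (l - m) * (f l * a * f m)"
proof -
  have "f l - f m = f l * ((1 - iota m * a) * f m) - (f l * (1 - iota l * a)) * f m"
    by (simp add: f_left f_right)
  also have "\<dots> = f l * ((1 - iota m * a) - (1 - iota l * a)) * f m"
    by (simp add: algebra_simps)
  also have "(1 - iota m * a) - (1 - iota l * a) = iota (l - m) * a"
    by (simp add: iota_diff algebra_simps)
  also have "f l * (iota (l - m) * a) * f m = iota (l - m) * (f l * a * f m)"
    by (simp only: mult.assoc[symmetric] iota_commute[of "l - m" "f l", symmetric])
  finally show ?thesis .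
qed

lemma norm_resolvent: "norm (f l - f m) \<le> cmod (l - m) * (norm (f l) * norm a * norm (f m))"
proof -
  have "norm (f l * a * f m) \<le> norm (f l) * norm a * norm (f m)"
    by (metis mult_right_mono norm_ge_zero norm_mult_ineq order_trans)
  then show ?thesis unfolding resolvent norm_iota_mult by (simp add: mult_left_mono)
qed

lemma norm_f_local:
  assumes "cmod (l - m) * norm a * norm (f m) \<le> 1/2"
  shows "norm (f l) \<le> 2 * norm (f m)"
proof -
  have "f l = f m + (f l - f m)" by simp
  then have "norm (f l) \<le> norm (f m) + norm (f l - f m)" by (metis norm_triangle_ineq)
  also have "norm (f l - f m) \<le> norm (f l) * (cmod (l - m) * norm a * norm (f m))"
    using norm_resolvent[of l m] by (simp add: mult_ac)
  also have "\<dots> \<le> norm (f l) * (1/2)" by (rule mult_left_mono[OF assms]) simp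
  finally show ?thesis by simp
qed

lemma f_cont: "continuous_on UNIV f"
  unfolding continuous_on_iff
proof (intro ballI allI impI)
  fix m :: complex and e :: real
  assume e: "e > 0"
  define K where "K = 2 * (norm (f m) + 1) ^ 2 * (norm a + 1)"
  have K: "K \<ge> 1" unfolding K_def
  proof -
    have "1 \<le> (norm (f m) + 1) ^ 2" by (simp add: one_le_power)
    moreover have "1 \<le> norm a + 1" by simp
    ultimately have "1 \<le> (norm (f m) + 1) ^ 2 * (norm a + 1)" by (metis mult_mono' one_le_mult_iff mult_1_left order_trans zero_le_one)
    then show "1 \<le> 2 * (norm (f m) + 1) ^ 2 * (norm a + 1)" by simp
  qed
  define d where "d = min (1 / K) (e / K)"
  have d: "d > 0" unfolding d_def using K e by simp
  show "\<exists>d>0. \<forall>x'\<in>UNIV. dist x' m < d \<longrightarrow> dist (f x') (f m) < e"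
  proof (intro exI conjI ballI impI)
    show "d > 0" by fact
    fix l assume "dist l m < d"
    then have lm: "cmod (l - m) < d" by (simp add: dist_norm)
    have N0: "0 \<le> norm (f m)" and A0: "0 \<le> norm a" by simp_all
    have NN: "norm (f m) \<le> (norm (f m) + 1) ^ 2" "norm (f m) ^ 2 \<le> (norm (f m) + 1) ^ 2"
      unfolding power2_eq_square using mult_nonneg_nonneg[OF N0 N0] N0
      by (simp_all add: algebra_simps)
    have Kge: "2 * norm a * norm (f m) \<le> K" "2 * norm (f m) ^ 2 * norm a \<le> K"
    proof -
      have "norm a * norm (f m) \<le> (norm a + 1) * (norm (f m) + 1) ^ 2"
        by (rule mult_mono) (use NN A0 in auto)
      then show "2 * norm a * norm (f m) \<le> K" unfolding K_def by (simp add: mult_ac)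
      have "norm (f m) ^ 2 * norm a \<le> (norm (f m) + 1) ^ 2 * (norm a + 1)"
        by (rule mult_mono) (use NN A0 in auto)
      then show "2 * norm (f m) ^ 2 * norm a \<le> K" unfolding K_def by (simp add: mult_ac)
    qed
    have loc: "cmod (l - m) * norm a * norm (f m) \<le> 1/2"
    proof -
      have "cmod (l - m) * (2 * norm a * norm (f m)) \<le> (1 / K) * K"
        using lm Kge(1) K unfolding d_def
        by (intro mult_mono) auto
      then show ?thesis using K by (simp add: mult_ac)
    qed
    have "norm (f l - f m) \<le> cmod (l - m) * (norm (f l) * norm a * norm (f m))"
      by (rule norm_resolvent)
    also have "\<dots> \<le> cmod (l - m) * ((2 * norm (f m)) * norm a * norm (f m))"
      using norm_f_local[OF loc] by (intro mult_left_mono mult_right_mono) auto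
    also have "\<dots> = cmod (l - m) * (2 * norm (f m) ^ 2 * norm a)"
      by (simp add: power2_eq_square mult_ac)
    also have "\<dots> \<le> cmod (l - m) * K" using Kge(2) by (intro mult_left_mono) auto
    also have "\<dots> < (e / K) * K"
      using lm K unfolding d_def by (intro mult_strict_right_mono) auto
    also have "\<dots> = e" using K by simp
    finally show "dist (f l) (f m) < e" by (simp add: dist_norm)
  qed
qed

lemma f_bounded:
  assumes "R \<ge> 0"
  obtains M where "M \<ge> 0" "\<And>l. cmod l \<le> R \<Longrightarrow> norm (f l) \<le> M"
proof -
  have "compact (f ` cball 0 R)"
    by (rule compact_continuous_image[OF continuous_on_subset[OF f_cont] compact_cball]) simp
  then have "bounded (f ` cball 0 R)" by (rule compact_imp_bounded)
  then obtain M where M: "\<And>y. y \<in> f ` cball 0 R \<Longrightarrow> norm y \<le> M" unfolding bounded_iff by blast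
  have "\<And>l. cmod l \<le> R \<Longrightarrow> norm (f l) \<le> M" using M by (simp add: dist_norm)
  moreover have "M \<ge> 0"
  proof -
    have "f 0 \<in> f ` cball 0 R" using assms by simp
    then have "norm (f 0) \<le> M" by (rule M)
    then show ?thesis using norm_ge_zero[of "f 0"] by linarith
  qed
  ultimately show ?thesis using that by blast
qed

definition H :: "nat \<Rightarrow> complex \<Rightarrow> 'a" where
  "H n lam = iota (1 / of_nat n) * (\<Sum>k<n. f (omega n ^ k * lam))"

lemma H_inv:
  assumes "n > 0"
  shows "H n lam * (1 - iota lam ^ n * a ^ n) = 1"
proof -
  have step: "f (omega n ^ k * lam) * (1 - iota lam ^ n * a ^ n)
      = (\<Sum>j<n. iota ((omega n ^ j) ^ k * lam ^ j) * a ^ j)" for k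
  proof -
    let ?mu = "omega n ^ k * lam"
    have "(omega n ^ k) ^ n = (omega n ^ n) ^ k" by (simp only: power_mult[symmetric] mult.commute)
    then have "?mu ^ n = lam ^ n"
      using omega_pow_n[OF assms] by (simp add: power_mult_distrib)
    then have "iota lam ^ n * a ^ n = (iota ?mu * a) ^ n"
      by (simp add: iota_mult_power iota_power)
    then have "f ?mu * (1 - iota lam ^ n * a ^ n) = f ?mu * ((1 - iota ?mu * a) * (\<Sum>j<n. (iota ?mu * a) ^ j))"
      by (simp add: geo_ring)
    also have "\<dots> = (\<Sum>j<n. (iota ?mu * a) ^ j)"
      by (simp add: mult.assoc[symmetric] f_left)
    also have "\<dots> = (\<Sum>j<n. iota ((omega n ^ j) ^ k * lam ^ j) * a ^ j)"
    proof (intro sum.cong refl)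
      fix j
      have "(omega n ^ k) ^ j = (omega n ^ j) ^ k" by (simp only: power_mult[symmetric] mult.commute)
      then show "(iota ?mu * a) ^ j = iota ((omega n ^ j) ^ k * lam ^ j) * a ^ j"
        by (simp add: iota_mult_power power_mult_distrib)
    qed
    finally show ?thesis .
  qed
  have "(\<Sum>k<n. f (omega n ^ k * lam)) * (1 - iota lam ^ n * a ^ n)
      = (\<Sum>k<n. \<Sum>j<n. iota ((omega n ^ j) ^ k * lam ^ j) * a ^ j)"
    by (simp add: sum_distrib_right step)
  also have "\<dots> = (\<Sum>j<n. \<Sum>k<n. iota ((omega n ^ j) ^ k * lam ^ j) * a ^ j)"
    by (rule sum.swap)
  also have "\<dots> = (\<Sum>j<n. iota ((\<Sum>k<n. (omega n ^ j) ^ k) * lam ^ j) * a ^ j)"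
    by (simp add: sum_distrib_right iota_sum)
  also have "\<dots> = (\<Sum>j<n. if j = 0 then iota (of_nat n) else 0)"
    by (intro sum.cong refl) (simp add: sum_omega)
  also have "\<dots> = iota (of_nat n)" using assms by (simp add: sum.delta)
  finally have *: "(\<Sum>k<n. f (omega n ^ k * lam)) * (1 - iota lam ^ n * a ^ n) = iota (of_nat n)" .
  have "H n lam * (1 - iota lam ^ n * a ^ n) = iota (1 / of_nat n) * iota (of_nat n)"
    unfolding H_def by (simp add: mult.assoc *)
  also have "\<dots> = 1" using assms by (simp flip: iota_mult)
  finally show ?thesis .
qed

end


lemma norm_iota_pow_mult: "norm (iota c ^ n * (y::'a::complex_banach_algebra_1)) = cmod c ^ n * norm y"
  by (simp add: iota_power[symmetric] norm_iota_mult norm_power)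

lemma cmod_inv_nat [simp]: "cmod (1 / complex_of_nat n) = 1 / real n"
  by (simp add: norm_divide)

context rickart
begin

lemma H_diff: "H n lam - H n mu = iota (1 / of_nat n) * (\<Sum>k<n. f (omega n ^ k * lam) - f (omega n ^ k * mu))"
  unfolding H_def by (simp add: sum_subtractf right_diff_distrib)

lemma H_lip:
  assumes n: "n > 0" and Mb: "\<And>l. cmod l \<le> R \<Longrightarrow> norm (f l) \<le> M"
    and lam: "cmod lam \<le> R" and mu: "cmod mu \<le> R"
  shows "norm (H n lam - H n mu) \<le> cmod (lam - mu) * (M * M * norm a)"
proof -
  have M0: "0 \<le> M" using Mb[OF lam] norm_ge_zero[of "f lam"] by linarith
  have each: "norm (f (omega n ^ k * lam) - f (omega n ^ k * mu)) \<le> cmod (lam - mu) * (M * M * norm a)" for k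
  proof -
    have n1: "cmod (omega n ^ k * lam) \<le> R" "cmod (omega n ^ k * mu) \<le> R"
      using lam mu by (simp_all add: norm_mult norm_power)
    have d: "cmod (omega n ^ k * lam - omega n ^ k * mu) = cmod (lam - mu)"
      by (simp add: right_diff_distrib[symmetric] norm_mult norm_power)
    have "norm (f (omega n ^ k * lam) - f (omega n ^ k * mu))
        \<le> cmod (lam - mu) * (norm (f (omega n ^ k * lam)) * norm a * norm (f (omega n ^ k * mu)))"
      using norm_resolvent d by metis
    also have "\<dots> \<le> cmod (lam - mu) * (M * norm a * M)"
      using Mb[OF n1(1)] Mb[OF n1(2)] M0
      by (intro mult_left_mono mult_mono) auto
    finally show ?thesis by (simp add: mult_ac)
  qed
  have "norm (H n lam - H n mu) = (1 / real n) * norm (\<Sum>k<n. f (omega n ^ k * lam) - f (omega n ^ k * mu))"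
    unfolding H_diff norm_iota_mult by simp
  also have "\<dots> \<le> (1 / real n) * (\<Sum>k<n. cmod (lam - mu) * (M * M * norm a))"
    by (intro mult_left_mono order_trans[OF norm_sum] sum_mono each) auto
  also have "\<dots> = cmod (lam - mu) * (M * M * norm a)" using n by simp
  finally show ?thesis .
qed

lemma H_bound:
  assumes n: "n > 0" and Mb: "\<And>l. cmod l \<le> R \<Longrightarrow> norm (f l) \<le> M"
    and lam: "cmod lam \<le> R"
  shows "norm (H n lam) \<le> M"
proof -
  have "norm (H n lam) = (1 / real n) * norm (\<Sum>k<n. f (omega n ^ k * lam))"
    unfolding H_def norm_iota_mult by simp
  also have "\<dots> \<le> (1 / real n) * (\<Sum>k<n. M)"
    using lam by (intro mult_left_mono order_trans[OF norm_sum] sum_mono Mb) (auto simp: norm_mult norm_power)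
  also have "\<dots> = M" using n by simp
  finally show ?thesis .
qed

lemma step:
  assumes Mb: "\<And>l. cmod l \<le> R \<Longrightarrow> norm (f l) \<le> M" and M0: "M \<ge> 0"
    and r2: "0 \<le> r2" "r2 \<le> R" and r3: "0 \<le> r3" "r3 \<le> R"
    and lip: "\<bar>r3 - r2\<bar> * (M * M * norm a) \<le> 1/4"
    and lim: "(\<lambda>n. r2 ^ n * norm (a ^ n)) \<longlonglongrightarrow> 0"
  shows "\<exists>C. \<forall>n. r3 ^ n * norm (a ^ n) \<le> C"
proof -
  have "1 / (4 * (M + 1)) > 0" using M0 by simp
  from order_tendstoD(2)[OF lim this] obtain N where
    N: "\<And>n. n \<ge> N \<Longrightarrow> r2 ^ n * norm (a ^ n) < 1 / (4 * (M + 1))"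
    unfolding eventually_sequentially by blast
  have key: "r3 ^ n * norm (a ^ n) \<le> 1" if n: "n \<ge> max N 1" for n
  proof -
    have n0: "n > 0" using n by simp
    define l2 where "l2 = complex_of_real r2"
    define l3 where "l3 = complex_of_real r3"
    have l2R: "cmod l2 \<le> R" and l3R: "cmod l3 \<le> R" using r2 r3 by (simp_all add: l2_def l3_def)
    define x2 where "x2 = iota l2 ^ n * a ^ n"
    define x3 where "x3 = iota l3 ^ n * a ^ n"
    define h2 where "h2 = H n l2"
    define h3 where "h3 = H n l3"
    have nx2: "norm x2 = r2 ^ n * norm (a ^ n)" unfolding x2_def norm_iota_pow_mult l2_def using r2 by simp
    have nx3: "norm x3 = r3 ^ n * norm (a ^ n)" unfolding x3_def norm_iota_pow_mult l3_def using r3 by simp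
    have e2: "h2 * (1 - x2) = 1" unfolding h2_def x2_def by (rule H_inv[OF n0])
    have e3: "h3 * (1 - x3) = 1" unfolding h3_def x3_def by (rule H_inv[OF n0])
    have "h2 - 1 = h2 * x2" using e2 by (simp add: algebra_simps)
    then have "norm (h2 - 1) \<le> norm h2 * norm x2" by (simp add: norm_mult_ineq)
    also have "\<dots> \<le> M * (1 / (4 * (M + 1)))"
      using H_bound[OF n0 Mb l2R] N[of n] n nx2 M0 r2 unfolding h2_def
      by (intro mult_mono) auto
    also have "\<dots> \<le> 1/4" using M0 by (simp add: field_simps)
    finally have d2: "norm (h2 - 1) \<le> 1/4" .
    have "norm (h3 - h2) \<le> cmod (l3 - l2) * (M * M * norm a)"
      unfolding h3_def h2_def by (rule H_lip[OF n0 Mb l3R l2R])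
    also have "cmod (l3 - l2) = \<bar>r3 - r2\<bar>" unfolding l3_def l2_def
      by (simp flip: of_real_diff)
    finally have d3: "norm (h3 - h2) \<le> 1/4" using lip by linarith
    define u where "u = h3 - 1"
    have nu: "norm u \<le> 1/2"
    proof -
      have "u = (h3 - h2) + (h2 - 1)" unfolding u_def by simp
      then have "norm u \<le> norm (h3 - h2) + norm (h2 - 1)" by (metis norm_triangle_ineq)
      then show ?thesis using d2 d3 by linarith
    qed
    have "u - u * x3 - x3 = (1 + u) * (1 - x3) - 1" by (simp add: algebra_simps)
    also have "(1 + u) * (1 - x3) = 1" using e3 unfolding u_def by simp
    finally have x3eq: "x3 = u - u * x3" by simp
    have "norm x3 \<le> norm u + norm (u * x3)" using x3eq by (metis norm_triangle_ineq4)
    also have "norm (u * x3) \<le> norm u * norm x3" by (rule norm_mult_ineq)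
    also have "norm u * norm x3 \<le> (1/2) * norm x3" using nu by (intro mult_right_mono) auto
    finally have "norm x3 \<le> 1" using nu by linarith
    then show ?thesis using nx3 by simp
  qed
  define C where "C = max 1 (\<Sum>n<max N 1. r3 ^ n * norm (a ^ n))"
  have "r3 ^ n * norm (a ^ n) \<le> C" for n
  proof (cases "n \<ge> max N 1")
    case True
    then show ?thesis using key[OF True] unfolding C_def by linarith
  next
    case False
    then have "n \<in> {..<max N 1}" by (simp add: not_le less_max_iff_disj)
    then have "r3 ^ n * norm (a ^ n) \<le> (\<Sum>n<max N 1. r3 ^ n * norm (a ^ n))"
      by (intro member_le_sum) (use r3 in auto)
    then show ?thesis unfolding C_def by linarith
  qed
  then show ?thesis by blast
qed

lemma decay:
  assumes C: "\<And>n. r1 ^ n * norm (a ^ n) \<le> C" and r2: "0 \<le> r2" "r2 < r1"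
  shows "(\<lambda>n. r2 ^ n * norm (a ^ n)) \<longlonglongrightarrow> 0"
proof (rule Lim_null_comparison)
  have r1: "r1 > 0" using r2 by linarith
  show "\<forall>\<^sub>F n in sequentially. norm (r2 ^ n * norm (a ^ n)) \<le> C * (r2 / r1) ^ n"
  proof (intro always_eventually allI)
    fix n
    have "r2 ^ n * norm (a ^ n) = (r2 / r1) ^ n * (r1 ^ n * norm (a ^ n))"
      using r1 by (simp add: power_divide)
    also have "\<dots> \<le> (r2 / r1) ^ n * C" using C r1 r2 by (intro mult_left_mono) auto
    finally show "norm (r2 ^ n * norm (a ^ n)) \<le> C * (r2 / r1) ^ n" using r2 by (simp add: mult_ac)
  qed
  show "(\<lambda>n. C * (r2 / r1) ^ n) \<longlonglongrightarrow> 0"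
    using r1 r2 by (intro tendsto_mult_right_zero LIMSEQ_power_zero) simp
qed

lemma decay0: "(\<lambda>n. (0::real) ^ n * norm (a ^ n)) \<longlonglongrightarrow> 0"
proof (rule Lim_null_comparison)
  show "\<forall>\<^sub>F n in sequentially. norm ((0::real) ^ n * norm (a ^ n)) \<le> (0::real) ^ n"
    by (intro always_eventually allI) (simp add: power_0_left)
  show "(\<lambda>n. (0::real) ^ n) \<longlonglongrightarrow> 0" by (intro LIMSEQ_power_zero) simp
qed

lemma main:
  assumes R: "R > 0"
  shows "\<exists>C. \<forall>n. R ^ n * norm (a ^ n) \<le> C"
proof -
  obtain M where M0: "M \<ge> 0" and Mb: "\<And>l. cmod l \<le> R \<Longrightarrow> norm (f l) \<le> M"
    using f_bounded[of R] R by auto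
  define Lc where "Lc = M * M * norm a"
  have Lc0: "Lc \<ge> 0" unfolding Lc_def using M0 by simp
  define del where "del = 1 / (8 * (Lc + 1))"
  have del0: "del > 0" unfolding del_def using Lc0 by simp
  have delL: "del * Lc \<le> 1/8" unfolding del_def using Lc0 by (simp add: field_simps)
  have claim: "\<forall>r. 0 \<le> r \<and> r \<le> R \<and> r \<le> real m * del \<longrightarrow> (\<exists>C. \<forall>n. r ^ n * norm (a ^ n) \<le> C)" for m
  proof (induction m)
    case 0
    show ?case
    proof (intro allI impI)
      fix r :: real assume "0 \<le> r \<and> r \<le> R \<and> r \<le> real 0 * del"
      then have "r = 0" by simp
      have "r ^ n * norm (a ^ n) \<le> 1" for n using \<open>r = 0\<close> by (cases n) simp_all
      then show "\<exists>C. \<forall>n. r ^ n * norm (a ^ n) \<le> C" by blast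
    qed
  next
    case (Suc m)
    show ?case
    proof (intro allI impI)
      fix r :: real assume r: "0 \<le> r \<and> r \<le> R \<and> r \<le> real (Suc m) * del"
      show "\<exists>C. \<forall>n. r ^ n * norm (a ^ n) \<le> C"
      proof (cases "r \<le> real m * del")
        case True
        then show ?thesis using Suc.IH r by blast
      next
        case False
        define r1 where "r1 = real m * del"
        have r1: "0 \<le> r1" "r1 < r" "r1 \<le> R" using False r del0 unfolding r1_def by auto
        obtain C1 where C1: "\<And>n. r1 ^ n * norm (a ^ n) \<le> C1"
          using Suc.IH r1 unfolding r1_def by blast
        have rr: "r \<le> r1 + del" using r unfolding r1_def by (simp add: algebra_simps)
        show ?thesis
        proof (cases "m = 0")
          case True
          have "\<bar>r - 0\<bar> * Lc \<le> del * Lc"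
            using r rr True Lc0 unfolding r1_def by (intro mult_right_mono) auto
          then have lip: "\<bar>r - 0\<bar> * (M * M * norm a) \<le> 1/4" using delL unfolding Lc_def by linarith
          show ?thesis by (rule step[OF Mb M0 _ _ _ _ lip decay0]) (use r R in auto)
        next
          case False
          define r2 where "r2 = r1 - del / 2"
          have r2: "0 \<le> r2" "r2 < r1" "r2 \<le> R"
          proof -
            have "real m \<ge> 1" using False by simp
            then have "del \<le> r1" unfolding r1_def using del0 by (simp add: mult_right_mono[of 1 "real m" del, simplified])
            then show "0 \<le> r2" unfolding r2_def using del0 by linarith
            show "r2 < r1" unfolding r2_def using del0 by linarith
            then show "r2 \<le> R" using r1 by linarith
          qed
          have "\<bar>r - r2\<bar> * Lc \<le> (2 * del) * Lc"
            using r rr r1 r2 del0 Lc0 unfolding r2_def by (intro mult_right_mono) auto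
          then have lip: "\<bar>r - r2\<bar> * (M * M * norm a) \<le> 1/4" using delL unfolding Lc_def by linarith
          show ?thesis
            by (rule step[OF Mb M0 r2(1) r2(3) _ _ lip decay[OF C1 r2(1) r2(2)]]) (use r in auto)
        qed
      qed
    qed
  qed
  define m where "m = nat \<lceil>R / del\<rceil>"
  have "R / del \<le> real m" unfolding m_def by linarith
  then have "R \<le> real m * del" using del0 by (simp add: field_simps)
  then show ?thesis using claim[of m] R by auto
qed

end

lemma quasinilpotent_imp_qn:
  fixes a :: "'a::complex_banach_algebra_1"
  assumes "quasinilpotent a"
  shows "qn a"
proof -
  have "rickart a"
  proof
    fix lam :: complex assume "lam \<noteq> 0"
    then have "lam \<notin> cspectrum a" using assms unfolding quasinilpotent_def by simp
    then show "invertible_el (iota lam - a)" unfolding cspectrum_def iota_def by simp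
  qed
  then show ?thesis unfolding qn_def using rickart.main by blast
qed

lemma qn_iff: "qn a \<longleftrightarrow> quasinilpotent (a::'a::complex_banach_algebra_1)"
  using qn_imp_quasinilpotent quasinilpotent_imp_qn by blast


section \<open>Binomial expansion after a prefix\<close>

lemma binom_prefix:
  fixes P x y :: "'a::ring_1"
  assumes H: "\<And>i m. P * x ^ i * y ^ m * x = P * x ^ Suc i * y ^ m"
  shows "P * (x + y) ^ n = (\<Sum>i\<le>n. of_nat (n choose i) * (P * x ^ i * y ^ (n - i)))"
proof (induction n)
  case 0
  then show ?case by simp
next
  case (Suc n)
  define F where "F = (\<lambda>i m. P * x ^ i * y ^ m)"
  have Fx: "F i m * x = F (Suc i) m" for i m unfolding F_def by (rule H)
  have Fy: "F i m * y = F i (Suc m)" for i m unfolding F_def by (simp only: power_Suc2 mult.assoc)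
  have IH: "P * (x + y) ^ n = (\<Sum>i\<le>n. of_nat (n choose i) * F i (n - i))"
    using Suc unfolding F_def .
  have "P * (x + y) ^ Suc n = P * (x + y) ^ n * x + P * (x + y) ^ n * y"
    by (simp only: power_Suc2 mult.assoc distrib_left)
  also have "P * (x + y) ^ n * x = (\<Sum>i\<le>n. of_nat (n choose i) * F (Suc i) (n - i))"
    unfolding IH sum_distrib_right by (simp add: mult.assoc Fx)
  also have "P * (x + y) ^ n * y = (\<Sum>i\<le>n. of_nat (n choose i) * F i (Suc (n - i)))"
    unfolding IH sum_distrib_right by (simp add: mult.assoc Fy)
  also have "\<dots> = (\<Sum>i\<le>Suc n. of_nat (n choose i) * F i (Suc n - i))"
    by (simp add: Suc_diff_le binomial_eq_0)
  also have "\<dots> = F 0 (Suc n) + (\<Sum>i\<le>n. of_nat (n choose Suc i) * F (Suc i) (n - i))"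
    by (subst sum.atMost_Suc_shift) simp
  finally have "P * (x + y) ^ Suc n = F 0 (Suc n) + (\<Sum>i\<le>n. (of_nat (n choose i) + of_nat (n choose Suc i)) * F (Suc i) (n - i))"
    by (simp add: sum.distrib distrib_right algebra_simps)
  also have "\<dots> = F 0 (Suc n) + (\<Sum>i\<le>n. of_nat (Suc n choose Suc i) * F (Suc i) (Suc n - Suc i))"
    by simp
  also have "\<dots> = (\<Sum>i\<le>Suc n. of_nat (Suc n choose i) * F i (Suc n - i))"
    by (simp only: sum.atMost_Suc_shift) simp
  finally show ?case unfolding F_def .
qed

lemma power_mult_comm:
  fixes x y :: "'a::monoid_mult"
  assumes "x * y = y * x"
  shows "(x * y) ^ n = x ^ n * y ^ n"
proof (induction n)
  case (Suc n)
  have c: "y * x ^ n = x ^ n * y" by (rule sym[OF power_commuting_commutes[OF assms]])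
  have "(x * y) ^ Suc n = x * y * (x ^ n * y ^ n)" by (simp add: Suc)
  also have "\<dots> = x * (y * x ^ n) * y ^ n" by (simp add: mult.assoc)
  also have "\<dots> = x ^ Suc n * y ^ Suc n" by (simp add: c mult.assoc)
  finally show ?case .
qed simp

section \<open>Sequences of subexponential growth\<close>

definition pq :: "(nat \<Rightarrow> real) \<Rightarrow> bool" where
  "pq A \<longleftrightarrow> (\<forall>t>0. \<exists>C. \<forall>i. t ^ i * A i \<le> C)"

lemma qn_pq: "qn z \<longleftrightarrow> pq (\<lambda>i. norm (z ^ i))"
  unfolding qn_def pq_def ..

lemma pq_le:
  assumes "pq A" "\<And>i. B i \<le> A i"
  shows "pq B"
  unfolding pq_def
proof (intro allI impI)
  fix t :: real assume t: "t > 0"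
  then obtain C where C: "\<And>i. t ^ i * A i \<le> C" using assms(1) unfolding pq_def by blast
  have "t ^ i * B i \<le> C" for i
  proof -
    have "t ^ i * B i \<le> t ^ i * A i" using t assms(2)[of i] by (intro mult_left_mono) auto
    then show ?thesis using C[of i] by linarith
  qed
  then show "\<exists>C. \<forall>i. t ^ i * B i \<le> C" by blast
qed

lemma pq_mono:
  assumes "pq A" "\<And>i. 0 \<le> A i" "c \<ge> 0" "\<And>i. B i \<le> c ^ i * A i"
  shows "pq B"
  unfolding pq_def
proof (intro allI impI)
  fix t :: real assume t: "t > 0"
  then have "t * (c + 1) > 0" using assms(3) by simp
  then obtain C where C: "\<And>i. (t * (c + 1)) ^ i * A i \<le> C" using assms(1) unfolding pq_def by blast
  have "t ^ i * B i \<le> C" for i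
  proof -
    have "t ^ i * B i \<le> t ^ i * (c ^ i * A i)" using assms(4)[of i] t by (intro mult_left_mono) auto
    also have "\<dots> = (t * c) ^ i * A i" by (simp add: power_mult_distrib mult.assoc)
    also have "\<dots> \<le> (t * (c + 1)) ^ i * A i"
      using t assms(2,3) by (intro mult_right_mono power_mono) auto
    also have "\<dots> \<le> C" by (rule C)
    finally show ?thesis .
  qed
  then show "\<exists>C. \<forall>i. t ^ i * B i \<le> C" by blast
qed

lemma pq_scale:
  assumes "pq A" "K \<ge> 0"
  shows "pq (\<lambda>i. K * A i)"
  unfolding pq_def
proof (intro allI impI)
  fix t :: real assume t: "t > 0"
  then obtain C where C: "\<And>i. t ^ i * A i \<le> C" using assms(1) unfolding pq_def by blast
  have "t ^ i * (K * A i) \<le> K * C" for i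
    using mult_left_mono[OF C[of i] assms(2)] by (simp add: mult_ac)
  then show "\<exists>C. \<forall>i. t ^ i * (K * A i) \<le> C" by blast
qed

lemma pq_shift:
  assumes "pq (\<lambda>j. A (m + j))" "\<And>i. 0 \<le> A i"
  shows "pq A"
  unfolding pq_def
proof (intro allI impI)
  fix t :: real assume t: "t > 0"
  then obtain C where C: "\<And>j. t ^ j * A (m + j) \<le> C" using assms(1) unfolding pq_def by blast
  define D where "D = t ^ m * C + (\<Sum>i<m. t ^ i * A i)"
  have C0: "C \<ge> 0" using C[of 0] assms(2)[of m] by simp
  have S0: "(\<Sum>i<m. t ^ i * A i) \<ge> 0" using t assms(2) by (intro sum_nonneg) simp
  have "t ^ i * A i \<le> D" for i
  proof (cases "i < m")
    case True
    then have "t ^ i * A i \<le> (\<Sum>i<m. t ^ i * A i)"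
      by (intro member_le_sum) (use t assms(2) in auto)
    moreover have "t ^ m * C \<ge> 0" using t C0 by simp
    ultimately show ?thesis unfolding D_def by linarith
  next
    case False
    then obtain j where i: "i = m + j" by (metis le_Suc_ex not_less)
    have "t ^ i * A i = t ^ m * (t ^ j * A (m + j))" by (simp add: i power_add mult.assoc)
    also have "\<dots> \<le> t ^ m * C" using C[of j] t by (intro mult_left_mono) auto
    finally show ?thesis unfolding D_def using S0 by linarith
  qed
  then show "\<exists>C. \<forall>i. t ^ i * A i \<le> C" by blast
qed

lemma pq_conv:
  assumes "pq A" "pq B" "\<And>i. 0 \<le> A i" "\<And>i. 0 \<le> B i"
  shows "pq (\<lambda>j. \<Sum>i\<le>j. real (j choose i) * (A i * B (j - i)))"
  unfolding pq_def
proof (intro allI impI)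
  fix t :: real assume t: "t > 0"
  then have t2: "2 * t > 0" by simp
  obtain CA where CA: "\<And>i. (2 * t) ^ i * A i \<le> CA" using assms(1) t2 unfolding pq_def by blast
  obtain CB where CB: "\<And>i. (2 * t) ^ i * B i \<le> CB" using assms(2) t2 unfolding pq_def by blast
  have CB0: "CB \<ge> 0" using CB[of 0] assms(4)[of 0] by simp
  have CA0: "CA \<ge> 0" using CA[of 0] assms(3)[of 0] by simp
  have "t ^ j * (\<Sum>i\<le>j. real (j choose i) * (A i * B (j - i))) \<le> CA * CB" for j
  proof -
    have "t ^ j * (\<Sum>i\<le>j. real (j choose i) * (A i * B (j - i)))
        = (\<Sum>i\<le>j. real (j choose i) * (((2 * t) ^ i * A i) * ((2 * t) ^ (j - i) * B (j - i)))) / 2 ^ j"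
    proof -
      have "t ^ j * (real (j choose i) * (A i * B (j - i)))
          = real (j choose i) * (((2 * t) ^ i * A i) * ((2 * t) ^ (j - i) * B (j - i))) / 2 ^ j"
        if "i \<in> {..j}" for i
      proof -
        have ij: "i + (j - i) = j" using that by simp
        have "(2 * t) ^ i * (2 * t) ^ (j - i) = 2 ^ j * t ^ j"
          by (subst power_add[symmetric], subst ij) (simp add: power_mult_distrib)
        then show ?thesis by (simp add: field_simps)
      qed
      then show ?thesis by (simp add: sum_distrib_left sum_divide_distrib)
    qed
    also have "\<dots> \<le> (\<Sum>i\<le>j. real (j choose i) * (CA * CB)) / 2 ^ j"
      using t assms(3,4) CA CB CB0 CA0
      by (intro divide_right_mono sum_mono mult_left_mono mult_mono) auto
    also have "\<dots> = CA * CB"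
      by (simp add: sum_distrib_right[symmetric] of_nat_sum[symmetric] choose_row_sum)
    finally show ?thesis .
  qed
  then show "\<exists>C. \<forall>j. t ^ j * (\<Sum>i\<le>j. real (j choose i) * (A i * B (j - i))) \<le> C" by blast
qed

lemma norm_sum_choose_le:
  fixes F :: "nat \<Rightarrow> 'a::complex_banach_algebra_1"
  shows "norm (\<Sum>i\<le>j. of_nat (j choose i) * F i) \<le> (\<Sum>i\<le>j. real (j choose i) * norm (F i))"
proof -
  have "norm (\<Sum>i\<le>j. of_nat (j choose i) * F i) \<le> (\<Sum>i\<le>j. norm (of_nat (j choose i) * F i))"
    by (rule norm_sum)
  also have "\<dots> \<le> (\<Sum>i\<le>j. real (j choose i) * norm (F i))"
    by (intro sum_mono) (metis norm_mult_ineq norm_of_nat)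
  finally show ?thesis .
qed

lemma norm_mult3_le: "norm ((x::'a::real_normed_algebra) * y * z) \<le> norm x * norm y * norm z"
  by (metis mult_right_mono norm_ge_zero norm_mult_ineq order_trans)

section \<open>qn under commuting operations\<close>

lemma norm_power_neg: "norm ((- (x::'a::real_normed_algebra_1)) ^ j) = norm (x ^ j)"
  by (cases "even j") (simp_all add: power_minus_even power_minus_odd)

lemma qn_neg: "qn x \<Longrightarrow> qn (- x)"
  unfolding qn_def by (simp add: norm_power_neg)

lemma qn_comm_mult:
  fixes x y :: "'a::complex_banach_algebra_1"
  assumes "x * y = y * x" "qn x"
  shows "qn (x * y)"
  unfolding qn_pq
proof (rule pq_mono[OF assms(2)[unfolded qn_pq]])
  fix i
  have "norm ((x * y) ^ i) = norm (x ^ i * y ^ i)" by (simp add: power_mult_comm[OF assms(1)])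
  also have "\<dots> \<le> norm (x ^ i) * norm (y ^ i)" by (rule norm_mult_ineq)
  also have "\<dots> \<le> norm (x ^ i) * norm y ^ i" by (intro mult_left_mono norm_power_ineq) simp
  finally show "norm ((x * y) ^ i) \<le> norm y ^ i * norm (x ^ i)" by (simp add: mult_ac)
qed auto

lemma qn_comm_mult2:
  fixes x y :: "'a::complex_banach_algebra_1"
  assumes "x * y = y * x" "qn x"
  shows "qn (y * x)"
  using qn_comm_mult[OF assms] assms(1) by simp

lemma qn_comm_add:
  fixes x y :: "'a::complex_banach_algebra_1"
  assumes c: "x * y = y * x" and "qn x" "qn y"
  shows "qn (x + y)"
  unfolding qn_pq
proof (rule pq_le[OF pq_conv[OF assms(2,3)[unfolded qn_pq]]])
  fix j
  have H: "1 * x ^ i * y ^ m * x = 1 * x ^ Suc i * y ^ m" for i m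
  proof -
    have "y ^ m * x = x * y ^ m" using power_commuting_commutes[OF c[symmetric]] by simp
    then show ?thesis by (simp only: mult_1_left mult.assoc power_Suc2)
  qed
  have "norm ((x + y) ^ j) = norm (\<Sum>i\<le>j. of_nat (j choose i) * (1 * x ^ i * y ^ (j - i)))"
    using binom_prefix[OF H, of j] by simp
  also have "\<dots> \<le> (\<Sum>i\<le>j. real (j choose i) * norm (1 * x ^ i * y ^ (j - i)))"
    by (rule norm_sum_choose_le)
  also have "\<dots> \<le> (\<Sum>i\<le>j. real (j choose i) * (norm (x ^ i) * norm (y ^ (j - i))))"
    by (intro sum_mono mult_left_mono) (simp_all add: norm_mult_ineq)
  finally show "norm ((x + y) ^ j) \<le> (\<Sum>i\<le>j. real (j choose i) * (norm (x ^ i) * norm (y ^ (j - i))))" .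
qed auto

lemma qn_pow:
  fixes z :: "'a::complex_banach_algebra_1"
  assumes n: "n > 0" and q: "qn (z ^ n)"
  shows "qn z"
  unfolding qn_def
proof (intro allI impI)
  fix t :: real assume t: "t > 0"
  then obtain C where C: "\<And>j. (t ^ n) ^ j * norm ((z ^ n) ^ j) \<le> C"
    using q unfolding qn_def by (meson zero_less_power)
  have C0: "C \<ge> 0" using C[of 0] by simp
  define D where "D = (1 + t * norm z) ^ n"
  have "t ^ i * norm (z ^ i) \<le> D * C" for i
  proof -
    define q r where "q = i div n" and "r = i mod n"
    have i: "i = r + n * q" unfolding q_def r_def by simp
    have r: "r < n" unfolding r_def using n by simp
    have "z ^ i = z ^ r * (z ^ n) ^ q" by (simp add: i power_add power_mult)
    then have "norm (z ^ i) \<le> norm z ^ r * norm ((z ^ n) ^ q)"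
      by (metis mult_right_mono norm_ge_zero norm_mult_ineq norm_power_ineq order_trans)
    then have "t ^ i * norm (z ^ i) \<le> t ^ i * (norm z ^ r * norm ((z ^ n) ^ q))"
      using t by (intro mult_left_mono) auto
    also have "\<dots> = (t * norm z) ^ r * ((t ^ n) ^ q * norm ((z ^ n) ^ q))"
      by (simp add: i power_add power_mult power_mult_distrib mult_ac)
    also have "\<dots> \<le> D * C"
    proof (rule mult_mono)
      have "(t * norm z) ^ r \<le> (1 + t * norm z) ^ r" using t by (intro power_mono) auto
      also have "\<dots> \<le> (1 + t * norm z) ^ n" using r t by (intro power_increasing) auto
      finally show "(t * norm z) ^ r \<le> D" unfolding D_def .
    qed (use C C0 t in \<open>auto simp: D_def\<close>)
    finally show ?thesis .
  qed
  then show "\<exists>C. \<forall>i. t ^ i * norm (z ^ i) \<le> C" by blast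
qed


locale evc =
  fixes a b :: "'a::complex_banach_algebra_1" and k :: nat
  assumes kpos: "k > 0"
    and hyp: "\<forall>\<alpha>s. length \<alpha>s = k \<and> set \<alpha>s \<subseteq> {a, b} \<longrightarrow>
           prod_list \<alpha>s * a * b = prod_list \<alpha>s * b * a"
begin

inductive_set T :: "'a set" where
  T1: "1 \<in> T"
| Ta: "u \<in> T \<Longrightarrow> a * u \<in> T"
| Tb: "u \<in> T \<Longrightarrow> b * u \<in> T"
| Tadd: "u \<in> T \<Longrightarrow> v \<in> T \<Longrightarrow> u + v \<in> T"
| Tneg: "u \<in> T \<Longrightarrow> - u \<in> T"

lemma T0: "0 \<in> T"
  using Tadd[OF T1 Tneg[OF T1]] by simp

lemma T_a: "a \<in> T" using Ta[OF T1] by simp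
lemma T_b: "b \<in> T" using Tb[OF T1] by simp

lemma T_diff:
  assumes "u \<in> T" "v \<in> T" shows "u - v \<in> T"
proof -
  have "u + - v \<in> T" using assms by (intro Tadd Tneg)
  then show ?thesis by (simp only: diff_conv_add_uminus)
qed

lemma T_mult: "u \<in> T \<Longrightarrow> v \<in> T \<Longrightarrow> u * v \<in> T"
proof (induction u rule: T.induct)
  case T1 then show ?case by simp
next
  case (Ta u) then show ?case using T.Ta[of "u * v"] by (simp add: mult.assoc)
next
  case (Tb u) then show ?case using T.Tb[of "u * v"] by (simp add: mult.assoc)
next
  case (Tadd u w) then show ?case using T.Tadd[of "u * v" "w * v"] by (simp add: distrib_right)
next
  case (Tneg u) then show ?case using T.Tneg[of "u * v"] by simp
qed

lemma T_pow: "u \<in> T \<Longrightarrow> u ^ n \<in> T"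
  by (induction n) (simp_all add: T1 T_mult)

lemma T_sum: "(\<And>i. i \<in> A \<Longrightarrow> f i \<in> T) \<Longrightarrow> sum f A \<in> T"
  by (induction A rule: infinite_finite_induct) (simp_all add: T0 Tadd)

lemma T_of_nat: "of_nat n \<in> T"
  by (induction n) (simp_all add: T0 T1 Tadd)

definition K :: "'a set" where
  "K = {P. \<forall>u\<in>T. P * u * a * b = P * u * b * a}"

lemma K_D: "P \<in> K \<Longrightarrow> u \<in> T \<Longrightarrow> P * u * a * b = P * u * b * a"
  unfolding K_def by blast

lemma K_right:
  assumes P: "P \<in> K" and v: "v \<in> T" shows "P * v \<in> K"
  unfolding K_def
proof (intro CollectI ballI)
  fix u assume u: "u \<in> T"
  have "P * (v * u) * a * b = P * (v * u) * b * a" using K_D[OF P T_mult[OF v u]] .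
  then show "P * v * u * a * b = P * v * u * b * a" by (simp add: mult.assoc)
qed

lemma K_add: "P \<in> K \<Longrightarrow> Q \<in> K \<Longrightarrow> P + Q \<in> K"
  unfolding K_def by (auto simp: distrib_right)

lemma K_neg: "P \<in> K \<Longrightarrow> - P \<in> K"
  unfolding K_def by auto

lemma prod_list_snoc: "prod_list (ws @ [x]) = prod_list ws * (x::'a)"
  by simp

lemma words_K_aux:
  assumes "u \<in> T"
  shows "\<forall>ws. set ws \<subseteq> {a, b} \<longrightarrow> k \<le> length ws \<longrightarrow> prod_list ws * u * a * b = prod_list ws * u * b * a"
  using assms
proof (induction u rule: T.induct)
  case T1
  show ?case
  proof (intro allI impI)
    fix ws :: "'a list" assume ws: "set ws \<subseteq> {a, b}" "k \<le> length ws"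
    define ws1 where "ws1 = take (length ws - k) ws"
    define ws2 where "ws2 = drop (length ws - k) ws"
    have ws12: "ws = ws1 @ ws2" unfolding ws1_def ws2_def by simp
    have l2: "length ws2 = k" unfolding ws2_def using ws(2) by simp
    have s2: "set ws2 \<subseteq> {a, b}" unfolding ws2_def using ws(1) by (meson order_trans set_drop_subset)
    have h: "prod_list ws2 * a * b = prod_list ws2 * b * a" using hyp l2 s2 by blast
    have "prod_list ws * 1 * a * b = prod_list ws1 * (prod_list ws2 * a * b)"
      by (simp add: ws12 mult.assoc)
    also have "\<dots> = prod_list ws * 1 * b * a" using h by (simp add: ws12 mult.assoc)
    finally show "prod_list ws * 1 * a * b = prod_list ws * 1 * b * a" .
  qed
next
  case (Ta u)
  show ?case
  proof (intro allI impI)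
    fix ws :: "'a list" assume ws: "set ws \<subseteq> {a, b}" "k \<le> length ws"
    have "set (ws @ [a]) \<subseteq> {a, b}" "k \<le> length (ws @ [a])" using ws by auto
    then have "prod_list (ws @ [a]) * u * a * b = prod_list (ws @ [a]) * u * b * a" using Ta.IH by blast
    then show "prod_list ws * (a * u) * a * b = prod_list ws * (a * u) * b * a"
      by (simp add: mult.assoc)
  qed
next
  case (Tb u)
  show ?case
  proof (intro allI impI)
    fix ws :: "'a list" assume ws: "set ws \<subseteq> {a, b}" "k \<le> length ws"
    have "set (ws @ [b]) \<subseteq> {a, b}" "k \<le> length (ws @ [b])" using ws by auto
    then have "prod_list (ws @ [b]) * u * a * b = prod_list (ws @ [b]) * u * b * a" using Tb.IH by blast
    then show "prod_list ws * (b * u) * a * b = prod_list ws * (b * u) * b * a"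
      by (simp add: mult.assoc)
  qed
next
  case (Tadd u v)
  then show ?case by (simp add: distrib_left distrib_right)
next
  case (Tneg u)
  then show ?case by simp
qed

lemma words_K: "set ws \<subseteq> {a, b} \<Longrightarrow> k \<le> length ws \<Longrightarrow> prod_list ws \<in> K"
  unfolding K_def using words_K_aux by blast

definition E :: "nat \<Rightarrow> 'a \<Rightarrow> bool" where
  "E n X \<longleftrightarrow> (\<forall>ws. set ws \<subseteq> {a, b} \<longrightarrow> k \<le> length ws + n \<longrightarrow> prod_list ws * X \<in> K)"

lemma E0: "u \<in> T \<Longrightarrow> E 0 u"
  unfolding E_def using words_K K_right by simp

lemma E_T:
  assumes "u \<in> T" "E n X"
  shows "E n (u * X)"
  using assms
proof (induction u rule: T.induct)
  case T1 then show ?case by simp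
next
  case (Ta u)
  then have IH: "E n (u * X)" by blast
  show ?case unfolding E_def
  proof (intro allI impI)
    fix ws :: "'a list" assume ws: "set ws \<subseteq> {a, b}" "k \<le> length ws + n"
    have "set (ws @ [a]) \<subseteq> {a, b}" "k \<le> length (ws @ [a]) + n" using ws by auto
    then have "prod_list (ws @ [a]) * (u * X) \<in> K" using IH unfolding E_def by blast
    then show "prod_list ws * (a * u * X) \<in> K" by (simp add: mult.assoc)
  qed
next
  case (Tb u)
  then have IH: "E n (u * X)" by blast
  show ?case unfolding E_def
  proof (intro allI impI)
    fix ws :: "'a list" assume ws: "set ws \<subseteq> {a, b}" "k \<le> length ws + n"
    have "set (ws @ [b]) \<subseteq> {a, b}" "k \<le> length (ws @ [b]) + n" using ws by auto
    then have "prod_list (ws @ [b]) * (u * X) \<in> K" using IH unfolding E_def by blast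
    then show "prod_list ws * (b * u * X) \<in> K" by (simp add: mult.assoc)
  qed
next
  case (Tadd u v)
  then show ?case unfolding E_def by (simp add: distrib_right distrib_left K_add)
next
  case (Tneg u)
  then show ?case unfolding E_def by (simp add: K_neg)
qed

lemma E_Suc:
  assumes "E n X" "x \<in> {a, b}"
  shows "E (Suc n) (x * X)"
  unfolding E_def
proof (intro allI impI)
  fix ws :: "'a list" assume ws: "set ws \<subseteq> {a, b}" "k \<le> length ws + Suc n"
  have "set (ws @ [x]) \<subseteq> {a, b}" "k \<le> length (ws @ [x]) + n" using ws assms(2) by auto
  then have "prod_list (ws @ [x]) * X \<in> K" using assms(1) unfolding E_def by blast
  then show "prod_list ws * (x * X) \<in> K" by (simp add: mult.assoc)
qed

lemma E_add: "E n X \<Longrightarrow> E n Y \<Longrightarrow> E n (X + Y)"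
  unfolding E_def by (simp add: distrib_left K_add)

lemma Kpow:
  assumes u: "u \<in> T" and v: "v \<in> T"
  shows "(a * u + b * v) ^ k \<in> K"
proof -
  let ?f = "a * u + b * v"
  have "E n (?f ^ n)" for n
  proof (induction n)
    case 0 then show ?case using E0[OF T1] by simp
  next
    case (Suc n)
    have "E (Suc n) (a * (u * ?f ^ n))" by (rule E_Suc[OF E_T[OF u Suc]]) simp
    moreover have "E (Suc n) (b * (v * ?f ^ n))" by (rule E_Suc[OF E_T[OF v Suc]]) simp
    ultimately have "E (Suc n) (a * (u * ?f ^ n) + b * (v * ?f ^ n))" by (rule E_add)
    then show ?case by (simp add: distrib_right mult.assoc)
  qed
  then have "E k (?f ^ k)" .
  then show ?thesis unfolding E_def by (metis empty_subsetI list.size(3) prod_list.Nil mult_1_left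
        set_empty add_0 order_refl)
qed

lemma comm1:
  assumes P: "P \<in> K" and w: "w \<in> T" and x: "x = a \<or> x = b"
  shows "\<forall>u\<in>T. P * u * x * w = P * u * w * x"
  using w
proof (induction w rule: T.induct)
  case T1 then show ?case by simp
next
  case (Ta w)
  show ?case
  proof
    fix u assume u: "u \<in> T"
    have ua: "u * a \<in> T" using T_mult[OF u T_a] .
    have "P * u * x * (a * w) = P * u * a * x * w"
    proof (cases "x = a")
      case True then show ?thesis by (simp add: mult.assoc)
    next
      case False
      then have "x = b" using x by simp
      have "P * u * a * b * w = P * u * b * a * w" using K_D[OF P u] by simp
      then show ?thesis using \<open>x = _\<close> by (simp add: mult.assoc)
    qed
    also have "\<dots> = P * (u * a) * x * w" by (simp add: mult.assoc)
    also have "\<dots> = P * (u * a) * w * x" using Ta.IH ua by blast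
    finally show "P * u * x * (a * w) = P * u * (a * w) * x" by (simp add: mult.assoc)
  qed
next
  case (Tb w)
  show ?case
  proof
    fix u assume u: "u \<in> T"
    have ub: "u * b \<in> T" using T_mult[OF u T_b] .
    have "P * u * x * (b * w) = P * u * b * x * w"
    proof (cases "x = b")
      case True then show ?thesis by (simp add: mult.assoc)
    next
      case False
      then have "x = a" using x by simp
      have "P * u * a * b * w = P * u * b * a * w" using K_D[OF P u] by simp
      then show ?thesis using \<open>x = _\<close> by (simp add: mult.assoc)
    qed
    also have "\<dots> = P * (u * b) * x * w" by (simp add: mult.assoc)
    also have "\<dots> = P * (u * b) * w * x" using Tb.IH ub by blast
    finally show "P * u * x * (b * w) = P * u * (b * w) * x" by (simp add: mult.assoc)
  qed
next
  case (Tadd w1 w2)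
  then show ?case by (simp add: distrib_left distrib_right)
next
  case (Tneg w)
  then show ?case by simp
qed

lemma comm2:
  assumes P: "P \<in> K" and v: "v \<in> T"
  shows "\<forall>u\<in>T. \<forall>w\<in>T. P * u * v * w = P * u * w * v"
  using v
proof (induction v rule: T.induct)
  case T1 then show ?case by simp
next
  case (Ta v)
  show ?case
  proof (intro ballI)
    fix u w assume u: "u \<in> T" and w: "w \<in> T"
    have ua: "u * a \<in> T" using T_mult[OF u T_a] .
    have "P * u * (a * v) * w = P * (u * a) * v * w" by (simp add: mult.assoc)
    also have "\<dots> = P * (u * a) * w * v" using Ta.IH ua w by blast
    also have "\<dots> = (P * u * a * w) * v" by (simp add: mult.assoc)
    also have "P * u * a * w = P * u * w * a" using comm1[OF P w, of a] u by blast
    finally show "P * u * (a * v) * w = P * u * w * (a * v)" by (simp add: mult.assoc)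
  qed
next
  case (Tb v)
  show ?case
  proof (intro ballI)
    fix u w assume u: "u \<in> T" and w: "w \<in> T"
    have ub: "u * b \<in> T" using T_mult[OF u T_b] .
    have "P * u * (b * v) * w = P * (u * b) * v * w" by (simp add: mult.assoc)
    also have "\<dots> = P * (u * b) * w * v" using Tb.IH ub w by blast
    also have "\<dots> = (P * u * b * w) * v" by (simp add: mult.assoc)
    also have "P * u * b * w = P * u * w * b" using comm1[OF P w, of b] u by blast
    finally show "P * u * (b * v) * w = P * u * w * (b * v)" by (simp add: mult.assoc)
  qed
next
  case (Tadd v1 v2)
  then show ?case by (simp add: distrib_left distrib_right)
next
  case (Tneg v)
  then show ?case by simp
qed

lemma comm3: "P \<in> K \<Longrightarrow> u \<in> T \<Longrightarrow> v \<in> T \<Longrightarrow> w \<in> T \<Longrightarrow> P * u * v * w = P * u * w * v"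
  using comm2 by blast

lemma binom_K:
  assumes P: "P \<in> K" and x: "x \<in> T" and y: "y \<in> T"
  shows "P * (x + y) ^ n = (\<Sum>i\<le>n. of_nat (n choose i) * (P * x ^ i * y ^ (n - i)))"
proof (rule binom_prefix)
  fix i m
  have "P * x ^ i * y ^ m * x = P * x ^ i * x * y ^ m"
    by (rule comm3[OF P T_pow[OF x] T_pow[OF y] x])
  then show "P * x ^ i * y ^ m * x = P * x ^ Suc i * y ^ m" by (simp only: power_Suc2 mult.assoc)
qed

lemma prod_K:
  assumes P: "P \<in> K" and x: "x \<in> T" and y: "y \<in> T"
  shows "P * (x * y) ^ j = P * x ^ j * y ^ j"
proof (induction j)
  case 0 then show ?case by simp
next
  case (Suc j)
  have "P * (x * y) ^ Suc j = P * (x * y) ^ j * x * y" by (simp only: power_Suc2 mult.assoc)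
  also have "\<dots> = P * x ^ j * y ^ j * x * y" using Suc by simp
  also have "P * x ^ j * y ^ j * x = P * x ^ j * x * y ^ j"
    by (rule comm3[OF P T_pow[OF x] T_pow[OF y] x])
  finally show ?case by (simp only: power_Suc2 mult.assoc)
qed

lemma replace_K:
  assumes P: "P \<in> K" and g: "g \<in> T" and eq: "\<And>u. u \<in> T \<Longrightarrow> P * u * f = P * u * g"
  shows "P * f ^ j = P * g ^ j"
proof (induction j)
  case 0 then show ?case by simp
next
  case (Suc j)
  have "P * f ^ Suc j = P * f ^ j * f" by (simp only: power_Suc2 mult.assoc)
  also have "\<dots> = P * g ^ j * f" using Suc by simp
  also have "\<dots> = P * g ^ j * g" by (rule eq[OF T_pow[OF g]])
  finally show ?case by (simp only: power_Suc2 mult.assoc)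
qed

lemma qn_decomp:
  assumes u0: "u0 \<in> T" and v0: "v0 \<in> T"
    and sT: "s \<in> T" and \<beta>T: "\<beta> \<in> T" and \<gamma>T: "\<gamma> \<in> T" and rT: "r \<in> T"
    and qs: "qn s" and qr: "qn r"
    and eq: "\<And>P u. P \<in> K \<Longrightarrow> u \<in> T \<Longrightarrow> P * u * (a * u0 + b * v0) = P * u * (s * \<beta> + \<gamma> * r)"
  shows "qn (a * u0 + b * v0)"
proof -
  define f where "f = a * u0 + b * v0"
  define g where "g = s * \<beta> + \<gamma> * r"
  define X where "X = s * \<beta>"
  define Y where "Y = \<gamma> * r"
  define P where "P = f ^ k"
  have P: "P \<in> K" unfolding P_def f_def by (rule Kpow[OF u0 v0])
  have XT: "X \<in> T" and YT: "Y \<in> T" unfolding X_def Y_def using T_mult sT \<beta>T \<gamma>T rT by auto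
  have gT: "g \<in> T" unfolding g_def using XT YT Tadd X_def Y_def by simp
  have fj: "f ^ (k + j) = P * g ^ j" for j
  proof -
    have "f ^ (k + j) = P * f ^ j" unfolding P_def by (simp add: power_add)
    also have "\<dots> = P * g ^ j" by (rule replace_K[OF P gT]) (use eq in \<open>simp add: f_def g_def P\<close>)
    finally show ?thesis .
  qed
  have trm: "norm (P * X ^ i * Y ^ m) \<le> norm P * (norm (s ^ i) * norm \<beta> ^ i) * (norm \<gamma> ^ m * norm (r ^ m))" for i m
  proof -
    have PX: "P * X ^ i = P * s ^ i * \<beta> ^ i" unfolding X_def by (rule prod_K[OF P sT \<beta>T])
    have Q: "P * X ^ i \<in> K" by (rule K_right[OF P T_pow[OF XT]])
    have "P * X ^ i * Y ^ m = P * X ^ i * \<gamma> ^ m * r ^ m" unfolding Y_def by (rule prod_K[OF Q \<gamma>T rT])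
    also have "\<dots> = P * (s ^ i * \<beta> ^ i) * (\<gamma> ^ m * r ^ m)" by (simp add: PX mult.assoc)
    finally have e: "P * X ^ i * Y ^ m = P * (s ^ i * \<beta> ^ i) * (\<gamma> ^ m * r ^ m)" .
    have n1: "norm (s ^ i * \<beta> ^ i) \<le> norm (s ^ i) * norm \<beta> ^ i"
      by (rule order_trans[OF norm_mult_ineq]) (intro mult_left_mono norm_power_ineq; simp)
    have n2: "norm (\<gamma> ^ m * r ^ m) \<le> norm \<gamma> ^ m * norm (r ^ m)"
      by (rule order_trans[OF norm_mult_ineq]) (intro mult_right_mono norm_power_ineq; simp)
    have "norm (P * X ^ i * Y ^ m) \<le> norm P * norm (s ^ i * \<beta> ^ i) * norm (\<gamma> ^ m * r ^ m)"
      unfolding e by (rule norm_mult3_le)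
    also have "\<dots> \<le> norm P * (norm (s ^ i) * norm \<beta> ^ i) * (norm \<gamma> ^ m * norm (r ^ m))"
      using n1 n2 by (intro mult_mono mult_left_mono) auto
    finally show ?thesis .
  qed
  define A where "A = (\<lambda>i. norm (s ^ i) * norm \<beta> ^ i)"
  define B where "B = (\<lambda>m. norm \<gamma> ^ m * norm (r ^ m))"
  have pA: "pq A" unfolding A_def
    by (rule pq_mono[OF qs[unfolded qn_pq], of "norm \<beta>"]) (auto simp: mult_ac)
  have pB: "pq B" unfolding B_def
    by (rule pq_mono[OF qr[unfolded qn_pq], of "norm \<gamma>"]) auto
  have A0: "\<And>i. 0 \<le> A i" and B0: "\<And>i. 0 \<le> B i" unfolding A_def B_def by auto
  have pS: "pq (\<lambda>j. norm P * (\<Sum>i\<le>j. real (j choose i) * (A i * B (j - i))))"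
    by (rule pq_scale[OF pq_conv[OF pA pB A0 B0]]) simp
  have "pq (\<lambda>j. norm (f ^ (k + j)))"
  proof (rule pq_le[OF pS])
    fix j
    have "norm (f ^ (k + j)) = norm (\<Sum>i\<le>j. of_nat (j choose i) * (P * X ^ i * Y ^ (j - i)))"
      unfolding fj g_def X_def[symmetric] Y_def[symmetric] binom_K[OF P XT YT] ..
    also have "\<dots> \<le> (\<Sum>i\<le>j. real (j choose i) * norm (P * X ^ i * Y ^ (j - i)))"
      by (rule norm_sum_choose_le)
    also have "\<dots> \<le> (\<Sum>i\<le>j. real (j choose i) * (norm P * (A i * B (j - i))))"
    proof (rule sum_mono)
      fix i
      have "norm (P * X ^ i * Y ^ (j - i)) \<le> norm P * (A i * B (j - i))"
        using trm[of i "j - i"] unfolding A_def B_def by (simp only: mult.assoc)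
      then show "real (j choose i) * norm (P * X ^ i * Y ^ (j - i)) \<le> real (j choose i) * (norm P * (A i * B (j - i)))"
        by (rule mult_left_mono) simp
    qed
    also have "\<dots> = norm P * (\<Sum>i\<le>j. real (j choose i) * (A i * B (j - i)))"
      by (simp add: sum_distrib_left mult_ac)
    finally show "norm (f ^ (k + j)) \<le> norm P * (\<Sum>i\<le>j. real (j choose i) * (A i * B (j - i)))" .
  qed
  then have "pq (\<lambda>i. norm (f ^ i))" by (rule pq_shift) simp
  then show ?thesis unfolding qn_pq f_def .
qed

end


lemma of_real_comm: "of_real r * (y::'a::complex_banach_algebra_1) = y * of_real r"
  using iota_commute[of "complex_of_real r" y] by (simp add: iota_of_real)

definition comm :: "'a::complex_banach_algebra_1 set \<Rightarrow> 'a set" where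
  "comm S = {y. \<forall>s\<in>S. s * y = y * s}"

abbreviation BC :: "'a::complex_banach_algebra_1 set \<Rightarrow> 'a set" where
  "BC S \<equiv> comm (comm S)"

lemma comm_1: "1 \<in> comm S" unfolding comm_def by simp
lemma comm_of_real: "of_real r \<in> comm S" unfolding comm_def by (simp add: of_real_comm)
lemma comm_add: "x \<in> comm S \<Longrightarrow> y \<in> comm S \<Longrightarrow> x + y \<in> comm S"
  unfolding comm_def by (simp add: distrib_left distrib_right)
lemma comm_neg: "x \<in> comm S \<Longrightarrow> - x \<in> comm S"
  unfolding comm_def by simp
lemma comm_diff: "x \<in> comm S \<Longrightarrow> y \<in> comm S \<Longrightarrow> x - y \<in> comm S"
  unfolding comm_def by (simp add: left_diff_distrib right_diff_distrib)
lemma comm_mult: "x \<in> comm S \<Longrightarrow> y \<in> comm S \<Longrightarrow> x * y \<in> comm S"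
  unfolding comm_def by (simp add: mult.assoc[symmetric]) (metis mult.assoc)
lemma comm_pow: "x \<in> comm S \<Longrightarrow> x ^ n \<in> comm S"
  by (induction n) (simp_all add: comm_1 comm_mult)
lemma comm_suminf:
  assumes "summable f" "\<And>j. f j \<in> comm S"
  shows "suminf f \<in> comm S"
  unfolding comm_def
proof (intro CollectI ballI)
  fix s assume s: "s \<in> S"
  have "s * suminf f = (\<Sum>j. s * f j)" using suminf_mult[OF assms(1)] by simp
  also have "\<dots> = (\<Sum>j. f j * s)" using assms(2) s unfolding comm_def by simp
  also have "\<dots> = suminf f * s" using suminf_mult2[OF assms(1)] by simp
  finally show "s * suminf f = suminf f * s" .
qed

lemma comm_0: "0 \<in> comm S" unfolding comm_def by simp

lemma comm_sum: "(\<And>i. i \<in> A \<Longrightarrow> f i \<in> comm S) \<Longrightarrow> sum f A \<in> comm S"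
  by (induction A rule: infinite_finite_induct) (simp_all add: comm_0 comm_add)

lemma comm_anti: "S \<subseteq> S' \<Longrightarrow> comm S' \<subseteq> comm S"
  unfolding comm_def by auto

lemma in_BC: "S \<subseteq> comm S \<Longrightarrow> S \<subseteq> BC S"
  unfolding comm_def by auto

lemma BC_commute:
  assumes "S \<subseteq> comm S" "x \<in> BC S" "y \<in> BC S"
  shows "x * y = y * x"
proof -
  have "x \<in> comm S" using comm_anti[OF assms(1)] assms(2) by blast
  then show ?thesis using assms(3) unfolding comm_def by auto
qed

lemma gpi_imp_qn:
  fixes e :: "'a::complex_banach_algebra_1"
  assumes "gpi_Hirano_invertible e"
  shows "\<exists>n>0. qn (e - e ^ (n + 1))"
proof -
  obtain x n where xex: "x * e * x = x" and ex: "e * x = x * e" and n: "n > 0"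
    and qw: "quasinilpotent (e - e ^ (n + 2) * x)"
    using assms unfolding gpi_Hirano_invertible_def by blast
  define S where "S = {e, x}"
  have S: "S \<subseteq> comm S" unfolding S_def comm_def using ex by auto
  have eB: "e \<in> BC S" and xB: "x \<in> BC S" using in_BC[OF S] unfolding S_def by auto
  define p where "p = e * x"
  define w where "w = e - e ^ (n + 2) * x"
  have pB: "p \<in> BC S" unfolding p_def by (intro comm_mult eB xB)
  have wB: "w \<in> BC S" unfolding w_def by (intro comm_diff comm_mult comm_pow eB xB)
  have pp: "p * p = p" unfolding p_def by (metis xex ex mult.assoc)
  have e2: "e ^ (n + 2) = e ^ (n + 1) * e"
  proof -
    have "e ^ (n + 2) = e ^ Suc (n + 1)" by simp
    also have "\<dots> = e ^ (n + 1) * e" by (rule power_Suc2)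
    finally show ?thesis .
  qed
  have w_eq: "w = e - e ^ (n + 1) * p"
    unfolding w_def p_def by (simp only: e2 mult.assoc)
  have p1p: "p * (1 - p) = 0" using pp by (simp add: right_diff_distrib)
  have w1p: "w * (1 - p) = e * (1 - p)"
    unfolding w_eq by (simp add: left_diff_distrib mult.assoc p1p)
  have wen: "w * e ^ n = e ^ n * w" by (rule BC_commute[OF S wB comm_pow[OF eB]])
  define c where "c = 1 - e ^ n * (1 - p)"
  have cB: "c \<in> BC S" unfolding c_def by (intro comm_diff comm_mult comm_pow comm_1 eB pB)
  have "w * c = w - w * e ^ n * (1 - p)" unfolding c_def by (simp add: right_diff_distrib mult.assoc)
  also have "w * e ^ n * (1 - p) = e ^ n * (e * (1 - p))" by (simp add: wen mult.assoc w1p)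
  also have "\<dots> = e ^ (n + 1) - e ^ (n + 1) * p"
    by (simp add: right_diff_distrib mult.assoc[symmetric] power_Suc2[symmetric])
  finally have "w * c = e - e ^ (n + 1)" unfolding w_eq by (simp add: algebra_simps)
  moreover have "qn (w * c)"
    by (rule qn_comm_mult[OF BC_commute[OF S wB cB]]) (use qw qn_iff w_def in auto)
  ultimately show ?thesis using n by auto
qed

lemma qn_pow_mult_gap:
  fixes e :: "'a::complex_banach_algebra_1"
  assumes "qn (e - e ^ (n + 1))" "m > 0"
  shows "qn (e - e ^ (n * m + 1))"
proof -
  define s where "s = e - e ^ (n + 1)"
  define \<sigma> where "\<sigma> = (\<Sum>i<m. e ^ (n * i))"
  have "s * \<sigma> = (\<Sum>i<m. s * e ^ (n * i))" unfolding \<sigma>_def by (simp add: sum_distrib_left)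
  also have "\<dots> = (\<Sum>i<m. e ^ (n * i + 1) - e ^ (n * Suc i + 1))"
  proof (intro sum.cong refl)
    fix i
    have "s * e ^ (n * i) = e * e ^ (n * i) - e ^ (n + 1) * e ^ (n * i)"
      unfolding s_def by (simp add: left_diff_distrib)
    also have "\<dots> = e ^ (n * i + 1) - e ^ (n * Suc i + 1)"
      by (simp add: power_add[symmetric] algebra_simps)
    finally show "s * e ^ (n * i) = e ^ (n * i + 1) - e ^ (n * Suc i + 1)" .
  qed
  also have "\<dots> = e - e ^ (n * m + 1)"
    using sum_lessThan_telescope'[of "\<lambda>i. e ^ (n * i + 1)" m] by simp
  finally have eq: "s * \<sigma> = e - e ^ (n * m + 1)" .
  have com: "s * \<sigma> = \<sigma> * s"
  proof -
    have S: "{e} \<subseteq> comm {e}" unfolding comm_def by auto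
    have eB: "e \<in> BC {e}" using in_BC[OF S] by blast
    have "s \<in> BC {e}" unfolding s_def by (intro comm_diff comm_pow eB)
    moreover have "\<sigma> \<in> BC {e}" unfolding \<sigma>_def by (intro comm_sum comm_pow eB)
    ultimately show ?thesis using BC_commute[OF S] by blast
  qed
  show ?thesis using qn_comm_mult[OF com] assms(1) eq unfolding s_def by simp
qed


lemma gch_rec:
  fixes a :: real
  shows "real (Suc k) * (a gchoose Suc k) = (a - real k) * (a gchoose k)"
  using gbinomial_mult_1[of a k] by (simp add: algebra_simps)

lemma gch_half_bound: "\<bar>(-1/2::real) gchoose j\<bar> \<le> 1"
proof (induction j)
  case 0 then show ?case by simp
next
  case (Suc k)
  have "real (Suc k) * \<bar>(-1/2::real) gchoose Suc k\<bar> = \<bar>-1/2 - real k\<bar> * \<bar>(-1/2::real) gchoose k\<bar>"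
    using arg_cong[OF gch_rec[of k "-1/2"], of abs] by (simp add: abs_mult)
  also have "\<dots> \<le> real (Suc k) * 1"
    using Suc by (intro mult_mono) auto
  finally show ?case by simp
qed

lemma gch_m1: "((-1::real) gchoose m) = (-1) ^ m"
proof (induction m)
  case 0 then show ?case by simp
next
  case (Suc k)
  have "real (Suc k) * ((-1::real) gchoose Suc k) = real (Suc k) * (- ((-1) ^ k))"
    using gch_rec[of k "-1"] Suc by (simp add: algebra_simps)
  then have "real (Suc k) * (((-1::real) gchoose Suc k) - (- ((-1) ^ k))) = 0"
    by (simp only: right_diff_distrib)
  then show ?case by simp
qed

definition cc :: "nat \<Rightarrow> real" where
  "cc j = ((-1/2::real) gchoose j) * (-4) ^ j"

lemma cc0: "cc 0 = 1" unfolding cc_def by simp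

lemma cc_bound: "\<bar>cc j\<bar> \<le> 4 ^ j"
  unfolding cc_def abs_mult using gch_half_bound[of j] by (simp add: power_abs mult_left_le_one_le)

lemma cc_conv: "(\<Sum>i\<le>m. cc i * cc (m - i)) = 4 ^ m"
proof -
  have "(\<Sum>i\<le>m. cc i * cc (m - i)) = (\<Sum>i\<le>m. (-4) ^ m * (((-1/2::real) gchoose i) * ((-1/2) gchoose (m - i))))"
  proof (intro sum.cong refl)
    fix i assume "i \<in> {..m}"
    then have p4: "(-4::real) ^ i * (-4) ^ (m - i) = (-4) ^ m" by (simp flip: power_add)
    show "cc i * cc (m - i) = (-4) ^ m * (((-1/2::real) gchoose i) * ((-1/2) gchoose (m - i)))"
      unfolding cc_def by (subst p4[symmetric]) (simp only: mult_ac)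
  qed
  also have "\<dots> = (-4) ^ m * (\<Sum>i\<in>{0..m}. ((-1/2::real) gchoose i) * ((-1/2) gchoose (m - i)))"
    by (simp add: sum_distrib_left atMost_atLeast0)
  also have "\<dots> = (-4) ^ m * ((-1::real) gchoose m)"
    using gbinomial_Vandermonde[of "-1/2::real" "-1/2" m] by simp
  also have "\<dots> = 4 ^ m" by (simp add: gch_m1 power_mult_distrib[symmetric])
  finally show ?thesis .
qed

lemma scaleR_power': "(c *\<^sub>R x) ^ n = (c ^ n) *\<^sub>R ((x::'a::real_algebra_1) ^ n)"
  by (induction n) simp_all

lemma idem_pow: "(q::'a::monoid_mult) * q = q \<Longrightarrow> n > 0 \<Longrightarrow> q ^ n = q"
proof (induction n)
  case (Suc n)
  then show ?case by (cases n) (simp_all add: power_Suc2[symmetric])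
qed simp

lemma comm_scaleR: "x \<in> comm S \<Longrightarrow> c *\<^sub>R x \<in> comm S"
  unfolding comm_def by simp

lemma qn_imp_gpi:
  fixes e :: "'a::complex_banach_algebra_1"
  assumes n: "n > 0" and qs: "qn (e - e ^ (n + 1))"
  shows "gpi_Hirano_invertible e"
proof -
  obtain m where nm: "n = Suc m" using n by (cases n) auto
  define S where "S = {e}"
  have S: "S \<subseteq> comm S" unfolding S_def comm_def by auto
  have eB: "e \<in> BC S" using in_BC[OF S] unfolding S_def by blast
  note BCc = BC_commute[OF S]
  define s where "s = e - e ^ (n + 1)"
  define g where "g = e ^ n"
  define t where "t = g - g * g"
  have sB: "s \<in> BC S" unfolding s_def by (intro comm_diff comm_pow eB)
  have gB: "g \<in> BC S" unfolding g_def by (intro comm_pow eB)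
  have tB: "t \<in> BC S" unfolding t_def by (intro comm_diff comm_mult gB)
  have t_eq: "t = e ^ m * s"
  proof -
    have 1: "e ^ m * e = g" unfolding g_def nm by (simp only: power_Suc2)
    have 2: "e ^ m * e ^ (n + 1) = g * g" unfolding g_def nm by (simp only: power_add[symmetric]) simp
    show ?thesis unfolding t_def s_def by (simp only: right_diff_distrib 1 2)
  qed
  have qt: "qn t" unfolding t_eq
    by (rule qn_comm_mult2[OF BCc[OF sB comm_pow[OF eB]]]) (use qs s_def in simp)
  define Tt where "Tt = (\<lambda>j. cc j *\<^sub>R t ^ j)"
  have TtB: "Tt j \<in> BC S" for j unfolding Tt_def by (intro comm_scaleR comm_pow tB)
  have sum4: "summable (\<lambda>j. 4 ^ j * norm (t ^ j))" using qn_summable[OF qt, of 4] by simp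
  have sumT: "summable (\<lambda>j. norm (Tt j))"
  proof (rule summable_comparison_test[OF _ sum4])
    show "\<exists>N. \<forall>j\<ge>N. norm (norm (Tt j)) \<le> 4 ^ j * norm (t ^ j)"
      unfolding Tt_def using cc_bound by (auto intro!: mult_right_mono)
  qed
  define R where "R = suminf Tt"
  have RB: "R \<in> BC S" unfolding R_def by (rule comm_suminf[OF summable_norm_cancel[OF sumT] TtB])
  define z where "z = 4 *\<^sub>R t"
  have zpow: "z ^ j = (4 ^ j) *\<^sub>R t ^ j" for j unfolding z_def by (rule scaleR_power')
  have sumz: "summable (\<lambda>j. norm (z ^ j))" using sum4 by (simp add: zpow)
  define Z where "Z = (\<Sum>j. z ^ j)"
  have Zinv: "(1 - z) * Z = 1" unfolding Z_def by (rule neumann(1)[OF sumz])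
  have RR: "R * R = Z"
  proof -
    have "(\<lambda>k. \<Sum>i\<le>k. Tt i * Tt (k - i)) sums (R * R)"
      unfolding R_def by (rule Cauchy_product_sums[OF sumT sumT])
    moreover have "(\<Sum>i\<le>k. Tt i * Tt (k - i)) = z ^ k" for k
    proof -
      have "(\<Sum>i\<le>k. Tt i * Tt (k - i)) = (\<Sum>i\<le>k. (cc i * cc (k - i)) *\<^sub>R t ^ k)"
      proof (intro sum.cong refl)
        fix i assume "i \<in> {..k}"
        then have "t ^ i * t ^ (k - i) = t ^ k" by (simp flip: power_add)
        then show "Tt i * Tt (k - i) = (cc i * cc (k - i)) *\<^sub>R t ^ k" unfolding Tt_def by simp
      qed
      also have "\<dots> = (\<Sum>i\<le>k. cc i * cc (k - i)) *\<^sub>R t ^ k" by (simp add: scaleR_sum_left)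
      also have "\<dots> = z ^ k" by (simp add: cc_conv zpow)
      finally show ?thesis .
    qed
    ultimately have "(\<lambda>k. z ^ k) sums (R * R)" by simp
    then show ?thesis unfolding Z_def by (simp add: sums_iff)
  qed
  define u where "u = 1 - 2 *\<^sub>R g"
  have uB: "u \<in> BC S" unfolding u_def by (intro comm_diff comm_1 comm_scaleR gB)
  have uu: "u * u = 1 - z"
    unfolding u_def z_def t_def by (simp add: algebra_simps scaleR_diff_right flip: scaleR_add_left)
  define y where "y = u * R"
  have yB: "y \<in> BC S" unfolding y_def by (intro comm_mult uB RB)
  have yy: "y * y = 1"
  proof -
    have "y * y = u * (R * u) * R" unfolding y_def by (simp add: mult.assoc)
    also have "R * u = u * R" by (rule BCc[OF RB uB])
    also have "u * (u * R) * R = (u * u) * (R * R)" by (simp add: mult.assoc)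
    finally show ?thesis using Zinv by (simp add: uu RR)
  qed
  define p where "p = (1/2) *\<^sub>R (1 - y)"
  have pB: "p \<in> BC S" unfolding p_def by (intro comm_scaleR comm_diff comm_1 yB)
  have pp: "p * p = p"
    unfolding p_def by (simp add: algebra_simps yy scaleR_diff_right flip: scaleR_add_left)
  define Tt' where "Tt' = (\<lambda>j. cc (Suc j) *\<^sub>R t ^ j)"
  have sumT': "summable (\<lambda>j. norm (Tt' j))"
  proof (rule summable_comparison_test[OF _ summable_mult[OF sum4, of 4]])
    show "\<exists>N. \<forall>j\<ge>N. norm (norm (Tt' j)) \<le> 4 * (4 ^ j * norm (t ^ j))"
    proof (intro exI allI impI)
      fix j :: nat
      have "\<bar>cc (Suc j)\<bar> \<le> 4 * 4 ^ j" using cc_bound[of "Suc j"] by simp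
      then have "\<bar>cc (Suc j)\<bar> * norm (t ^ j) \<le> (4 * 4 ^ j) * norm (t ^ j)" by (rule mult_right_mono) simp
      then show "norm (norm (Tt' j)) \<le> 4 * (4 ^ j * norm (t ^ j))" unfolding Tt'_def by (simp add: mult.assoc)
    qed
  qed
  define R' where "R' = suminf Tt'"
  have R'B: "R' \<in> BC S" unfolding R'_def
    by (rule comm_suminf[OF summable_norm_cancel[OF sumT']]) (simp add: Tt'_def comm_scaleR comm_pow tB)
  have R1: "R - 1 = t * R'"
  proof -
    have "(\<Sum>j. Tt (Suc j)) = R - Tt 0" unfolding R_def by (rule suminf_split_head[OF summable_norm_cancel[OF sumT]])
    moreover have "Tt 0 = 1" unfolding Tt_def by (simp add: cc0)
    moreover have "(\<Sum>j. Tt (Suc j)) = (\<Sum>j. t * Tt' j)" unfolding Tt_def Tt'_def by simp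
    moreover have "(\<Sum>j. t * Tt' j) = t * R'" unfolding R'_def by (rule suminf_mult[OF summable_norm_cancel[OF sumT']])
    ultimately show ?thesis by simp
  qed
  define d where "d = g - p"
  have dB: "d \<in> BC S" unfolding d_def by (intro comm_diff gB pB)
  have d_eq: "d = (1/2) *\<^sub>R (u * (R - 1))"
    unfolding d_def p_def y_def u_def by (simp add: algebra_simps scaleR_diff_right)
  define w where "w = (1/2) *\<^sub>R (u * R')"
  have wB: "w \<in> BC S" unfolding w_def by (intro comm_scaleR comm_mult uB R'B)
  have d_tw: "d = t * w"
  proof -
    have "u * t = t * u" by (rule BCc[OF uB tB])
    then have "u * (t * R') = t * (u * R')" by (metis mult.assoc)
    then show ?thesis unfolding d_eq R1 w_def by simp
  qed
  have qd: "qn d" unfolding d_tw by (rule qn_comm_mult[OF BCc[OF tB wB] qt])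
  define v where "v = (\<Sum>j. (- d) ^ j)"
  have sumd: "summable (\<lambda>j. norm ((- d) ^ j))" using qn_summable[OF qn_neg[OF qd], of 1] by simp
  have vinv: "(1 + d) * v = 1" using neumann(1)[OF sumd] unfolding v_def by simp
  have vB: "v \<in> BC S" unfolding v_def
    by (rule comm_suminf[OF summable_norm_cancel[OF sumd]]) (intro comm_pow comm_neg dB)
  define x where "x = e ^ m * p * v"
  have xB: "x \<in> BC S" unfolding x_def by (intro comm_mult comm_pow eB pB vB)
  have gpd: "g = p + d" unfolding d_def by simp
  have ex: "e * x = p"
  proof -
    have "e * x = g * p * v" unfolding x_def g_def nm by (simp add: mult.assoc)
    also have "g * p = p * (1 + d)"
      unfolding gpd by (simp add: distrib_right distrib_left pp BCc[OF dB pB])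
    also have "p * (1 + d) * v = p" by (simp add: mult.assoc vinv)
    finally show ?thesis .
  qed
  have xe: "x * e = e * x" by (rule BCc[OF xB eB])
  have xex: "x * e * x = x"
  proof -
    have "x * e * x = p * x" by (simp add: xe ex)
    also have "\<dots> = (p * e ^ m) * p * v" unfolding x_def by (simp add: mult.assoc)
    also have "p * e ^ m = e ^ m * p" by (rule BCc[OF pB comm_pow[OF eB]])
    also have "e ^ m * p * p * v = x" unfolding x_def by (simp add: mult.assoc pp)
    finally show ?thesis .
  qed
  have main: "qn (e - e ^ (n + 2) * x)"
  proof -
    have e2: "e ^ (n + 2) * x = e ^ (n + 1) * p"
    proof -
      have "e ^ (n + 2) = e ^ Suc (n + 1)" by simp
      also have "\<dots> = e ^ (n + 1) * e" by (rule power_Suc2)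
      finally show ?thesis by (simp add: mult.assoc ex)
    qed
    have split: "e - e ^ (n + 2) * x = e * (1 - p) + s * p"
      unfolding e2 s_def by (simp add: algebra_simps)
    have qsp: "qn (s * p)" by (rule qn_comm_mult[OF BCc[OF sB pB]]) (use qs s_def in simp)
    have q1p: "(1 - p) * (1 - p) = 1 - p" using pp by (simp add: algebra_simps)
    have p1p: "p * (1 - p) = 0" using pp by (simp add: algebra_simps)
    have "(e * (1 - p)) ^ n = e ^ n * (1 - p) ^ n"
      by (rule power_mult_comm[OF BCc[OF eB comm_diff[OF comm_1 pB]]])
    also have "(1 - p) ^ n = 1 - p" by (rule idem_pow[OF q1p n])
    also have "e ^ n * (1 - p) = d * (1 - p)"
      unfolding g_def[symmetric] gpd by (simp add: distrib_right p1p)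
    finally have pw: "(e * (1 - p)) ^ n = d * (1 - p)" .
    have "qn ((e * (1 - p)) ^ n)" unfolding pw by (rule qn_comm_mult[OF BCc[OF dB comm_diff[OF comm_1 pB]] qd])
    then have qe: "qn (e * (1 - p))" by (rule qn_pow[OF n])
    have c: "e * (1 - p) * (s * p) = s * p * (e * (1 - p))"
      by (rule BCc) (intro comm_mult comm_diff comm_1 eB pB sB)+
    show ?thesis unfolding split by (rule qn_comm_add[OF c qe qsp])
  qed
  have qm: "quasinilpotent (e - e ^ (n + 2) * x)" using main by (simp add: qn_iff)
  have ex': "e * x = x * e" using xe by simp
  show ?thesis unfolding gpi_Hirano_invertible_def
    by (intro exI[of _ x] conjI xex ex' exI[of _ n] n qm)
qed


lemma qn_0: "qn (0::'a::complex_banach_algebra_1)"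
  unfolding qn_def
proof (intro allI impI exI[of _ 1])
  fix t :: real and j :: nat assume "t > 0"
  show "t ^ j * norm ((0::'a) ^ j) \<le> 1" by (cases j) simp_all
qed

context evc
begin

lemma part1a: "qn a \<Longrightarrow> qn (a * b)"
  using qn_decomp[of b 0 a b 0 0] T_b T0 T_a qn_0 by simp

lemma part1b: "qn b \<Longrightarrow> qn (a * b)"
  using qn_decomp[of b 0 0 0 a b] T_b T0 T_a qn_0 by simp

lemma part2a: "qn a \<Longrightarrow> qn b \<Longrightarrow> qn (a + b)"
  using qn_decomp[of 1 1 a 1 1 b] T_b T1 T_a by simp

lemma part2b:
  assumes "qn a" "qn (a + b)" shows "qn b"
proof -
  have abT: "a + b \<in> T" by (rule Tadd[OF T_a T_b])
  have "qn (a * 0 + b * 1)"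
    by (rule qn_decomp[OF T0 T1 abT T1 T1 Tneg[OF T_a] assms(2) qn_neg[OF assms(1)]]) (simp add: algebra_simps)
  then show ?thesis by simp
qed

lemma part3:
  assumes ga: "gpi_Hirano_invertible a" and gb: "gpi_Hirano_invertible b"
  shows "gpi_Hirano_invertible (a * b)"
proof -
  obtain n where n: "n > 0" and qa: "qn (a - a ^ (n + 1))" using gpi_imp_qn[OF ga] by blast
  obtain m where m: "m > 0" and qb: "qn (b - b ^ (m + 1))" using gpi_imp_qn[OF gb] by blast
  define N where "N = n * m"
  have N: "N > 0" unfolding N_def using n m by simp
  have qa': "qn (a - a ^ (N + 1))" unfolding N_def by (rule qn_pow_mult_gap[OF qa m])
  have qb': "qn (b - b ^ (N + 1))" unfolding N_def using qn_pow_mult_gap[OF qb n] by (simp add: mult.commute)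
  define u0 where "u0 = b - b * (a * b) ^ N"
  have u0T: "u0 \<in> T" unfolding u0_def by (intro T_diff T_mult T_pow T_a T_b)
  have f_eq: "a * u0 + b * 0 = a * b - (a * b) ^ (N + 1)"
    unfolding u0_def by (simp add: right_diff_distrib mult.assoc)
  have sT: "a - a ^ (N + 1) \<in> T" by (intro T_diff T_pow T_a)
  have rT: "b - b ^ (N + 1) \<in> T" by (intro T_diff T_pow T_b)
  have "qn (a * u0 + b * 0)"
  proof (rule qn_decomp[OF u0T T0 sT T_b T_pow[OF T_a] rT qa' qb'])
    fix P u assume P: "P \<in> K" and u: "u \<in> T"
    have Pu: "P * u \<in> K" by (rule K_right[OF P u])
    have "P * u * (a * b) ^ (N + 1) = P * u * a ^ (N + 1) * b ^ (N + 1)"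
      by (rule prod_K[OF Pu T_a T_b])
    then show "P * u * (a * u0 + b * 0) = P * u * ((a - a ^ (N + 1)) * b + a ^ (N + 1) * (b - b ^ (N + 1)))"
      unfolding f_eq by (simp add: algebra_simps)
  qed
  then have "qn (a * b - (a * b) ^ (N + 1))" unfolding f_eq .
  then show ?thesis by (rule qn_imp_gpi[OF N])
qed

lemma part4:
  assumes qa: "qn a" and gb: "gpi_Hirano_invertible b"
  shows "gpi_Hirano_invertible (a + b)"
proof -
  obtain m where m: "m > 0" and qb: "qn (b - b ^ (m + 1))" using gpi_imp_qn[OF gb] by blast
  define e where "e = a + b"
  have eT: "e \<in> T" unfolding e_def by (rule Tadd[OF T_a T_b])
  define u0 where "u0 = 1 - e ^ m"
  have u0T: "u0 \<in> T" unfolding u0_def by (intro T_diff T_pow T1 eT)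
  have f_eq: "a * u0 + b * u0 = e - e ^ (m + 1)"
    unfolding u0_def e_def by (simp add: algebra_simps)
  define W where "W = (\<Sum>i\<le>m. of_nat (Suc m choose Suc i) * (a ^ i * b ^ (m - i)))"
  have WT: "W \<in> T" unfolding W_def by (intro T_sum T_mult T_of_nat T_pow T_a T_b)
  have bT: "1 - W \<in> T" by (intro T_diff T1 WT)
  have rT: "b - b ^ (m + 1) \<in> T" by (intro T_diff T_pow T_b)
  have "qn (a * u0 + b * u0)"
  proof (rule qn_decomp[OF u0T u0T T_a bT T1 rT qa qb])
    fix P u assume P: "P \<in> K" and u: "u \<in> T"
    define P' where "P' = P * u"
    have Pu: "P' \<in> K" unfolding P'_def by (rule K_right[OF P u])
    have "P' * e ^ (m + 1) = (\<Sum>i\<le>Suc m. of_nat (Suc m choose i) * (P' * a ^ i * b ^ (Suc m - i)))"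
      unfolding e_def using binom_K[OF Pu T_a T_b, of "Suc m"] by simp
    also have "\<dots> = P' * b ^ Suc m + (\<Sum>i\<le>m. of_nat (Suc m choose Suc i) * (P' * a ^ Suc i * b ^ (m - i)))"
      by (subst sum.atMost_Suc_shift) simp
    also have "(\<Sum>i\<le>m. of_nat (Suc m choose Suc i) * (P' * a ^ Suc i * b ^ (m - i))) = P' * (a * W)"
    proof -
      have "(\<Sum>i\<le>m. of_nat (Suc m choose Suc i) * (P' * a ^ Suc i * b ^ (m - i)))
          = (\<Sum>i\<le>m. P' * (a * (of_nat (Suc m choose Suc i) * (a ^ i * b ^ (m - i)))))"
      proof (rule sum.cong[OF refl])
        fix i
        let ?c = "Suc m choose Suc i"
        have "of_nat ?c * (P' * a ^ Suc i * b ^ (m - i)) = of_nat ?c * (P' * a) * (a ^ i * b ^ (m - i))"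
          by (simp add: mult.assoc)
        also have "of_nat ?c * (P' * a) = (P' * a) * of_nat ?c" by (rule mult_of_nat_commute)
        also have "(P' * a) * of_nat ?c * (a ^ i * b ^ (m - i)) = P' * (a * (of_nat ?c * (a ^ i * b ^ (m - i))))"
          by (simp add: mult.assoc)
        finally show "of_nat ?c * (P' * a ^ Suc i * b ^ (m - i)) = P' * (a * (of_nat ?c * (a ^ i * b ^ (m - i))))" .
      qed
      also have "\<dots> = P' * (a * W)" unfolding W_def by (simp add: sum_distrib_left)
      finally show ?thesis .
    qed
    finally have be: "P' * e ^ (m + 1) = P' * b ^ Suc m + P' * (a * W)" .
    have "P' * (a * u0 + b * u0) = P' * a + P' * b - P' * e ^ (m + 1)"
      unfolding f_eq e_def by (simp add: algebra_simps)
    also have "\<dots> = P' * (a * (1 - W) + 1 * (b - b ^ (m + 1)))"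
      unfolding be by (simp add: algebra_simps)
    finally show "P * u * (a * u0 + b * u0) = P * u * (a * (1 - W) + 1 * (b - b ^ (m + 1)))"
      unfolding P'_def .
  qed
  then have "qn (e - e ^ (m + 1))" unfolding f_eq .
  then show ?thesis unfolding e_def by (rule qn_imp_gpi[OF m])
qed

end

theorem lemma3p9:
  fixes a b :: "'a::complex_banach_algebra_1" and k :: nat
  assumes "k > 0"
    and "\<forall>\<alpha>s. length \<alpha>s = k \<and> set \<alpha>s \<subseteq> {a, b} \<longrightarrow>
           prod_list \<alpha>s * a * b = prod_list \<alpha>s * b * a"
  shows "((quasinilpotent a \<or> quasinilpotent b) \<longrightarrow> quasinilpotent (a * b))
       \<and> (quasinilpotent a \<longrightarrow> (quasinilpotent b \<longleftrightarrow> quasinilpotent (a + b)))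
       \<and> (gpi_Hirano_invertible a \<and> gpi_Hirano_invertible b \<longrightarrow> gpi_Hirano_invertible (a * b))
       \<and> (quasinilpotent a \<and> gpi_Hirano_invertible b \<longrightarrow> gpi_Hirano_invertible (a + b))"
proof -
  interpret evc a b k using assms by unfold_locales
  show ?thesis
    using part1a part1b part2a part2b part3 part4 by (auto simp flip: qn_iff)
qed


end
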